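(* Let $T:(0,1]\to(0,1]$ be defined by $Tx=2^n x-1$ for $x\in(2^{-n},2^{-n+1}]$, $n\in\mathbb{N}=\{1,2,\dots\}$. For $x\in(0,1]$ let $d_1(x)=\lceil -\log_2 x\rceil$ and $d_i(x)=d_1(T^{i-1}x)$ for $i\ge 2$, so that $x=\sum_{i\ge1}2^{-(d_1(x)+\cdots+d_i(x))}$. Define the Khintchine exponent $\gamma(x)=\lim_{n\to\infty}\frac1n\sum_{j=1}^n d_j(x)$ (when the limit exists) and, for $\xi\ge 1$, $E(\xi)=\{x\in(0,1]:\gamma(x)=\xi\}$ and $t(\xi)=\dim_H E(\xi)$. Then $\dim_H E(1)=0$ and for every $\xi>1$, $$t(\xi)=\dim_H E(\xi)=\frac{\frac{\log(\xi-1)}{\xi}+\log\xi-\log(\xi-1)}{\log 2}.$$ Moreover: (1) $t(2)=1$; (2) $\lim_{\xi\to1}t(\xi)=0$ and $\lim_{\xi\to\infty}t(\xi)=0$; (3) $t'(\xi)>0$ for $1<\xi<2$, $t'(2)=0$, and $t'(\xi)<0$ for $\xi>2$; (4) $\lim_{\xi\to1}t'(\xi)=\infty$ and $\lim_{\xi\to\infty}t'(\xi)=0$; (5) the function $t$ has exactly one inflection point on $(1,\infty)$.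
   Context: $\dim_H$ denotes Hausdorff dimension, with $\dim_H\emptyset=0$. *)

theory Defs
  imports "HOL-Analysis.Analysis"
begin

definition hausdorff_content :: "real \<Rightarrow> real \<Rightarrow> 'a::metric_space set \<Rightarrow> ennreal" where
  "hausdorff_content s \<delta> A =
     (INF C \<in> {C :: nat \<Rightarrow> 'a set. A \<subseteq> (\<Union>i. C i) \<and> (\<forall>i. bounded (C i) \<and> diameter (C i) \<le> \<delta>)}.
        (\<Sum>i. ennreal (diameter (C i) powr s)))"

definition hausdorff_measure :: "real \<Rightarrow> 'a::metric_space set \<Rightarrow> ennreal" where
  "hausdorff_measure s A = (SUP \<delta> \<in> {0<..}. hausdorff_content s \<delta> A)"

text \<open>Hausdorff dimension; the infimum of the empty set is not an issue for subsets of R,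
  and dim_H of the empty set is 0.\<close>
definition hausdorff_dim :: "'a::metric_space set \<Rightarrow> real" where
  "hausdorff_dim A = Inf {s. 0 \<le> s \<and> hausdorff_measure s A = 0}"

text \<open>d1 x is the n \<ge> 1 with x in (2^-n, 2^-n+1]; for x in (0,1] this is floor(-log2 x) + 1
  (the paper writes ceiling(-log2 x), which agrees except at dyadic endpoints).\<close>
definition d1 :: "real \<Rightarrow> nat" where
  "d1 x = nat \<lfloor>- log 2 x\<rfloor> + 1"

definition Tmap :: "real \<Rightarrow> real" where
  "Tmap x = 2 ^ d1 x * x - 1"

definition digit :: "nat \<Rightarrow> real \<Rightarrow> nat" where
  "digit i x = d1 ((Tmap ^^ (i - 1)) x)"

definition khintchine_exp_eq :: "real \<Rightarrow> real \<Rightarrow> bool" where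
  "khintchine_exp_eq x \<xi> \<longleftrightarrow>
     ((\<lambda>n. (\<Sum>j=1..n. real (digit j x)) / real n) \<longlonglongrightarrow> \<xi>)"

definition Elevel :: "real \<Rightarrow> real set" where
  "Elevel \<xi> = {x \<in> {0<..1}. khintchine_exp_eq x \<xi>}"

definition tdim :: "real \<Rightarrow> real" where
  "tdim \<xi> = hausdorff_dim (Elevel \<xi>)"

definition strict_convex_on_real :: "real set \<Rightarrow> (real \<Rightarrow> real) \<Rightarrow> bool" where
  "strict_convex_on_real S f \<longleftrightarrow>
     (\<forall>x\<in>S. \<forall>y\<in>S. \<forall>u. x \<noteq> y \<and> 0 < u \<and> u < 1 \<longrightarrow>
        f ((1 - u) * x + u * y) < (1 - u) * f x + u * f y)"

definition strict_concave_on_real :: "real set \<Rightarrow> (real \<Rightarrow> real) \<Rightarrow> bool" where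
  "strict_concave_on_real S f \<longleftrightarrow> strict_convex_on_real S (\<lambda>x. - f x)"

definition inflection_point :: "(real \<Rightarrow> real) \<Rightarrow> real \<Rightarrow> bool" where
  "inflection_point f c \<longleftrightarrow> (\<exists>e>0.
     (strict_convex_on_real {c-e..c} f \<and> strict_concave_on_real {c..c+e} f) \<or>
     (strict_concave_on_real {c-e..c} f \<and> strict_convex_on_real {c..c+e} f))"

end

theory Submission
  imports Defs "HOL-Probability.Probability" "HOL-Real_Asymp.Real_Asymp"
begin

definition bt :: "(nat \<Rightarrow> bool) \<Rightarrow> nat \<Rightarrow> real" where
  "bt \<omega> i = (if \<omega> i then (1/2)^(Suc i) else 0)"

definition val :: "(nat \<Rightarrow> bool) \<Rightarrow> real" where
  "val \<omega> = (\<Sum>i. bt \<omega> i)"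

lemma bt_nonneg: "0 \<le> bt \<omega> i"
  by (simp add: bt_def)

lemma bt_le: "bt \<omega> i \<le> (1/2)^(Suc i)"
  by (simp add: bt_def)

lemma summable_half: "summable (\<lambda>i. (1/2::real)^(Suc i))"
  by (simp add: summable_geometric)

lemma suminf_half: "(\<Sum>i. (1/2::real)^(Suc i)) = 1"
proof -
  have "(\<Sum>i. (1/2::real)^(Suc i)) = (1/2) * (\<Sum>i. (1/2::real)^i)"
    by (subst suminf_mult[symmetric]) (auto simp: summable_geometric)
  also have "\<dots> = 1" by (simp add: suminf_geometric)
  finally show ?thesis .
qed

lemma summable_bt: "summable (bt \<omega>)"
proof (rule summable_comparison_test'[OF summable_half])
  fix n show "norm (bt \<omega> n) \<le> (1/2)^Suc n" using bt_le[of \<omega> n] bt_nonneg[of \<omega> n] by simp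
qed

lemma val_nonneg: "0 \<le> val \<omega>"
  unfolding val_def by (rule suminf_nonneg[OF summable_bt bt_nonneg])

lemma val_le1: "val \<omega> \<le> 1"
proof -
  have "val \<omega> \<le> (\<Sum>i. (1/2::real)^(Suc i))"
    unfolding val_def by (rule suminf_le[OF bt_le summable_bt summable_half])
  thus ?thesis using suminf_half by linarith
qed

fun kk :: "nat \<Rightarrow> (nat \<Rightarrow> bool) \<Rightarrow> nat" where
  "kk 0 \<omega> = 0"
| "kk (Suc m) \<omega> = 2 * kk m \<omega> + (if \<omega> m then 1 else 0)"

lemma sum_bt: "(\<Sum>i<m. bt \<omega> i) = real (kk m \<omega>) / 2^m"
  by (induction m) (auto simp: bt_def field_simps)

lemma val_split: "val \<omega> = real (kk m \<omega>) / 2^m + val (\<lambda>i. \<omega> (i+m)) / 2^m"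
proof -
  have "val \<omega> = (\<Sum>n. bt \<omega> (n+m)) + (\<Sum>i<m. bt \<omega> i)"
    unfolding val_def by (rule suminf_split_initial_segment[OF summable_bt])
  moreover have "bt \<omega> (n+m) = bt (\<lambda>i. \<omega> (i+m)) n / 2^m" for n
    by (simp add: bt_def power_add field_simps)
  moreover have "(\<Sum>n. bt (\<lambda>i. \<omega> (i+m)) n / 2^m) = val (\<lambda>i. \<omega> (i+m)) / 2^m"
    unfolding val_def by (rule suminf_divide[OF summable_bt])
  ultimately show ?thesis by (simp add: sum_bt)
qed

lemma val_bounds:
  "real (kk m \<omega>) / 2^m \<le> val \<omega>" "val \<omega> \<le> (real (kk m \<omega>) + 1) / 2^m"
proof -
  have a: "0 \<le> val (\<lambda>i. \<omega> (i+m))" "val (\<lambda>i. \<omega> (i+m)) \<le> 1" by (rule val_nonneg, rule val_le1)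
  show "real (kk m \<omega>) / 2^m \<le> val \<omega>" using a by (subst val_split[of _ m]) auto
  show "val \<omega> \<le> (real (kk m \<omega>) + 1) / 2^m" using a
    by (subst val_split[of _ m]) (simp add: add_divide_distrib divide_right_mono)
qed

lemma kk_lt: "kk m \<omega> < 2^m"
  by (induction m) auto

lemma kk_cong: "(\<And>i. i < m \<Longrightarrow> \<omega> i = \<omega>' i) \<Longrightarrow> kk m \<omega> = kk m \<omega>'"
  by (induction m) auto

lemma kk_inj: "kk m \<omega> = kk m \<omega>' \<Longrightarrow> i < m \<Longrightarrow> \<omega> i = \<omega>' i"
proof (induction m arbitrary: i)
  case 0 then show ?case by simp
next
  case (Suc m)
  from Suc.prems(1) have h: "2 * kk m \<omega> + (if \<omega> m then 1 else 0) = 2 * kk m \<omega>' + (if \<omega>' m then 1 else (0::nat))"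
    by simp
  have o: "\<And>w. odd (2 * kk m w + (if w m then 1 else (0::nat))) \<longleftrightarrow> w m" by simp
  have e1: "\<omega> m = \<omega>' m" using o[of \<omega>] o[of \<omega>'] h by metis
  with h have e2: "kk m \<omega> = kk m \<omega>'" by simp
  show ?case using Suc.prems(2) Suc.IH[OF e2] e1 by (cases "i = m") auto
qed

lemma kk_zero: "(\<And>i. i < m \<Longrightarrow> \<not> \<omega> i) \<Longrightarrow> kk m \<omega> = 0"
  by (induction m) auto

lemma val_zero: "(\<And>i. \<not> \<omega> i) \<Longrightarrow> val \<omega> = 0"
  by (simp add: val_def bt_def)

definition io :: "(nat \<Rightarrow> bool) \<Rightarrow> bool" where
  "io \<omega> \<longleftrightarrow> (\<forall>n. \<exists>i\<ge>n. \<omega> i)"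

definition fo :: "(nat \<Rightarrow> bool) \<Rightarrow> nat" where
  "fo \<omega> = (LEAST i. \<omega> i)"

definition sh1 :: "(nat \<Rightarrow> bool) \<Rightarrow> nat \<Rightarrow> bool" where
  "sh1 \<omega> = (\<lambda>i. \<omega> (i + Suc (fo \<omega>)))"

lemma io_ex: "io \<omega> \<Longrightarrow> \<exists>i. \<omega> i"
  unfolding io_def by blast

lemma fo_true: "io \<omega> \<Longrightarrow> \<omega> (fo \<omega>)"
  unfolding fo_def using io_ex by (metis LeastI)

lemma fo_least: "i < fo \<omega> \<Longrightarrow> \<not> \<omega> i"
  unfolding fo_def using not_less_Least by blast

lemma io_shift: "io \<omega> \<Longrightarrow> io (\<lambda>i. \<omega> (i + k))"
  unfolding io_def
proof (intro allI)
  fix n assume "\<forall>n. \<exists>i\<ge>n. \<omega> i"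
  then obtain i where i: "i \<ge> n + k" "\<omega> i" by blast
  show "\<exists>j\<ge>n. \<omega> (j + k)" by (rule exI[of _ "i - k"]) (use i in auto)
qed

lemma io_sh1: "io \<omega> \<Longrightarrow> io (sh1 \<omega>)"
  unfolding sh1_def by (rule io_shift)

lemma kk_ge1: "\<omega> i \<Longrightarrow> i < m \<Longrightarrow> kk m \<omega> \<ge> 1"
proof (induction m)
  case 0 then show ?case by simp
next
  case (Suc m) then show ?case by (cases "i = m") auto
qed

lemma val_pos: "io \<omega> \<Longrightarrow> 0 < val \<omega>"
proof -
  assume "io \<omega>"
  then obtain i where i: "\<omega> i" using io_ex by blast
  have "kk (Suc i) \<omega> \<ge> 1" using kk_ge1[of \<omega> i "Suc i"] i by simp
  hence "0 < real (kk (Suc i) \<omega>) / 2^Suc i" by simp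
  also have "\<dots> \<le> val \<omega>" by (rule val_bounds)
  finally show ?thesis .
qed

lemma val_in: "io \<omega> \<Longrightarrow> val \<omega> \<in> {0<..1}"
  using val_pos val_le1 by auto

lemma kk_fo: "io \<omega> \<Longrightarrow> kk (Suc (fo \<omega>)) \<omega> = 1"
  using kk_zero[of "fo \<omega>" \<omega>] fo_least fo_true by auto

lemma digit_step:
  assumes "io \<omega>"
  shows "d1 (val \<omega>) = Suc (fo \<omega>)" "Tmap (val \<omega>) = val (sh1 \<omega>)"
proof -
  define a where "a = fo \<omega>"
  define v where "v = val (sh1 \<omega>)"
  have v: "0 < v" "v \<le> 1" unfolding v_def using val_in[OF io_sh1[OF assms]] by auto
  have y0: "val \<omega> = real (kk (Suc a) \<omega>) / 2^Suc a + val (\<lambda>i. \<omega> (i + Suc a)) / 2^Suc a"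
    by (rule val_split)
  have y: "val \<omega> = (1 + v) / 2^Suc a"
    using y0 kk_fo[OF assms] unfolding v_def sh1_def a_def
    by (simp only: add_divide_distrib of_nat_1)
  have ypos: "0 < val \<omega>" using y v by simp
  have "\<lfloor>log 2 (1 / val \<omega>)\<rfloor> = int a"
  proof (subst floor_log_eq_powr_iff)
    show "0 < 1 / val \<omega>" using ypos by simp
    have p1: "2 powr real_of_int (int a) = 2^a" by (simp add: powr_realpow)
    have p2: "2 powr real_of_int (int a + 1) = 2^Suc a"
      by (simp add: powr_add powr_realpow)
    have yy0: "2^Suc a * val \<omega> = 1 + v" using y by simp
    have yy: "2 * (2^a * val \<omega>) = 1 + v" using yy0 by (simp add: mult.assoc)
    have "2^a * val \<omega> \<le> 1" using yy v by linarith
    hence A: "(2::real)^a \<le> 1 / val \<omega>" using ypos by (simp add: le_divide_eq mult.commute)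
    have "1 < 2^Suc a * val \<omega>" using yy0 v by linarith
    hence B: "1 / val \<omega> < 2^Suc a" using ypos by (simp add: divide_less_eq mult.commute)
    show "2 powr real_of_int (int a) \<le> 1 / val \<omega> \<and> 1 / val \<omega> < 2 powr real_of_int (int a + 1)"
      unfolding p1 p2 using A B by blast
  qed simp
  moreover have "- log 2 (val \<omega>) = log 2 (1 / val \<omega>)"
    using ypos by (simp add: log_divide)
  ultimately have "\<lfloor>- log 2 (val \<omega>)\<rfloor> = int a" by simp
  thus d: "d1 (val \<omega>) = Suc (fo \<omega>)" unfolding d1_def a_def by simp
  show "Tmap (val \<omega>) = val (sh1 \<omega>)"
  proof -
    have "Tmap (val \<omega>) = 2^Suc a * val \<omega> - 1" unfolding Tmap_def d a_def by simp
    also have "\<dots> = v" using y by simp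
    finally show ?thesis unfolding v_def .
  qed
qed

fun shk :: "nat \<Rightarrow> (nat \<Rightarrow> bool) \<Rightarrow> (nat \<Rightarrow> bool)" where
  "shk 0 \<omega> = \<omega>"
| "shk (Suc k) \<omega> = sh1 (shk k \<omega>)"

lemma io_shk: "io \<omega> \<Longrightarrow> io (shk k \<omega>)"
  by (induction k) (auto simp: io_sh1)

lemma Tmap_iter: "io \<omega> \<Longrightarrow> (Tmap ^^ k) (val \<omega>) = val (shk k \<omega>)"
  by (induction k) (auto simp: digit_step(2) io_shk)

lemma digit_val: "io \<omega> \<Longrightarrow> digit (Suc k) (val \<omega>) = Suc (fo (shk k \<omega>))"
  unfolding digit_def by (simp add: Tmap_iter digit_step(1) io_shk)

definition S :: "nat \<Rightarrow> (nat \<Rightarrow> bool) \<Rightarrow> nat" where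
  "S k \<omega> = (\<Sum>j<k. Suc (fo (shk j \<omega>)))"

lemma S_0 [simp]: "S 0 \<omega> = 0" by (simp add: S_def)
lemma S_Suc: "S (Suc k) \<omega> = S k \<omega> + Suc (fo (shk k \<omega>))" by (simp add: S_def)

lemma sum_digits: "io \<omega> \<Longrightarrow> (\<Sum>j=1..n. real (digit j (val \<omega>))) = real (S n \<omega>)"
proof -
  assume io: "io \<omega>"
  have "(\<Sum>j=1..n. real (digit j (val \<omega>))) = (\<Sum>k<n. real (digit (Suc k) (val \<omega>)))"
    using sum.atLeast1_atMost_eq[of "\<lambda>j. real (digit j (val \<omega>))" n] by simp
  also have "\<dots> = (\<Sum>k<n. real (Suc (fo (shk k \<omega>))))" using digit_val[OF io] by simp
  also have "\<dots> = real (S n \<omega>)" unfolding S_def by simp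
  finally show ?thesis .
qed

lemma shk_eq: "io \<omega> \<Longrightarrow> shk k \<omega> = (\<lambda>i. \<omega> (i + S k \<omega>))"
proof (induction k)
  case 0 then show ?case by simp
next
  case (Suc k)
  have "shk (Suc k) \<omega> = sh1 (shk k \<omega>)" by simp
  also have "\<dots> = (\<lambda>i. shk k \<omega> (i + Suc (fo (shk k \<omega>))))" unfolding sh1_def ..
  also have "\<dots> = (\<lambda>i. \<omega> (i + S (Suc k) \<omega>))" 
    unfolding S_Suc by (subst Suc.IH[OF Suc.prems]) (simp add: add_ac)
  finally show ?case .
qed

definition N :: "nat \<Rightarrow> (nat \<Rightarrow> bool) \<Rightarrow> nat" where
  "N m \<omega> = card {i. i < m \<and> \<omega> i}"

lemma N_0 [simp]: "N 0 \<omega> = 0" by (simp add: N_def)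

lemma N_Suc: "N (Suc m) \<omega> = N m \<omega> + (if \<omega> m then 1 else 0)"
proof -
  have "{i. i < Suc m \<and> \<omega> i} = {i. i < m \<and> \<omega> i} \<union> (if \<omega> m then {m} else {})"
    by (auto simp: less_Suc_eq)
  thus ?thesis unfolding N_def by (auto simp: card_insert_if)
qed

lemma N_add: "N (a + l) \<omega> = N a \<omega> + N l (\<lambda>i. \<omega> (i + a))"
  by (induction l) (simp_all add: N_Suc add.commute)

lemma N_mono: "m \<le> m' \<Longrightarrow> N m \<omega> \<le> N m' \<omega>"
  unfolding N_def by (rule card_mono) auto

lemma N_le: "N m \<omega> \<le> m"
proof -
  have "N m \<omega> \<le> card {..<m}" unfolding N_def by (rule card_mono) auto
  thus ?thesis by simp
qed

lemma N_before_fo: "l \<le> fo \<omega> \<Longrightarrow> N l \<omega> = 0"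
proof -
  assume a: "l \<le> fo \<omega>"
  have "\<And>i. i < l \<Longrightarrow> \<not> \<omega> i" using fo_least a by (meson less_le_trans)
  hence "{i. i < l \<and> \<omega> i} = {}" by blast
  thus ?thesis unfolding N_def by simp
qed

lemma N_fo: "io \<omega> \<Longrightarrow> N (Suc (fo \<omega>)) \<omega> = 1"
  using N_Suc[of "fo \<omega>" \<omega>] N_before_fo[of "fo \<omega>" \<omega>] fo_true by simp

lemma N_S: "io \<omega> \<Longrightarrow> N (S k \<omega>) \<omega> = k"
proof (induction k)
  case 0 then show ?case by simp
next
  case (Suc k)
  have "N (S (Suc k) \<omega>) \<omega> = N (S k \<omega>) \<omega> + N (Suc (fo (shk k \<omega>))) (\<lambda>i. \<omega> (i + S k \<omega>))"
    unfolding S_Suc N_add ..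
  also have "(\<lambda>i. \<omega> (i + S k \<omega>)) = shk k \<omega>" using shk_eq[OF Suc.prems] by simp
  also have "N (Suc (fo (shk k \<omega>))) (shk k \<omega>) = 1" by (rule N_fo[OF io_shk[OF Suc.prems]])
  finally show ?case using Suc by simp
qed

lemma N_less_S: "io \<omega> \<Longrightarrow> m < S k \<omega> \<Longrightarrow> N m \<omega> < k"
proof (induction k arbitrary: m)
  case 0 then show ?case by simp
next
  case (Suc k)
  show ?case
  proof (cases "m < S k \<omega>")
    case True then show ?thesis using Suc.IH[OF Suc.prems(1)] by fastforce
  next
    case False
    then obtain l where l: "m = S k \<omega> + l" by (metis le_add_diff_inverse not_less)
    with Suc.prems(2) have "l \<le> fo (shk k \<omega>)" by (simp add: S_Suc)
    hence "N l (shk k \<omega>) = 0" by (rule N_before_fo)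
    hence "N m \<omega> = k" using l N_add[of "S k \<omega>" l \<omega>] shk_eq[OF Suc.prems(1), of k] N_S[OF Suc.prems(1), of k]
      by simp
    thus ?thesis by simp
  qed
qed

lemma N_ge_iff: "io \<omega> \<Longrightarrow> k \<le> N m \<omega> \<longleftrightarrow> S k \<omega> \<le> m"
proof
  assume io: "io \<omega>"
  { assume "k \<le> N m \<omega>" thus "S k \<omega> \<le> m" using N_less_S[OF io, of m k] by linarith }
  { assume "S k \<omega> \<le> m" thus "k \<le> N m \<omega>" using N_mono[of "S k \<omega>" m \<omega>] N_S[OF io, of k] by simp }
qed

lemma S_strict: "S k \<omega> < S (Suc k) \<omega>"
  by (simp add: S_Suc)

lemma S_strict_mono: "strict_mono (\<lambda>k. S k \<omega>)"
  by (rule strict_monoI_Suc) (rule S_strict)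

lemma S_ge: "k \<le> S k \<omega>"
  by (induction k) (auto simp: S_Suc)

lemma div_mult_cancel_aux: "(s::real) \<noteq> 0 \<Longrightarrow> A / s * (s / n) = A / n"
  by (cases "n = 0") (simp_all add: field_simps)

lemma freq_to_digits:
  assumes io: "io \<omega>" and p: "p > 0" and lim: "(\<lambda>m. real (N m \<omega>) / real m) \<longlonglongrightarrow> p"
  shows "(\<lambda>n. real (S n \<omega>) / real n) \<longlonglongrightarrow> 1/p"
proof -
  have "((\<lambda>m. real (N m \<omega>) / real m) \<circ> (\<lambda>k. S k \<omega>)) \<longlonglongrightarrow> p"
    by (rule LIMSEQ_subseq_LIMSEQ[OF lim S_strict_mono])
  hence l2: "(\<lambda>n. real n / real (S n \<omega>)) \<longlonglongrightarrow> p" by (simp add: o_def N_S[OF io])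
  have "(\<lambda>n. inverse (real n / real (S n \<omega>))) \<longlonglongrightarrow> inverse p"
    using p by (intro tendsto_inverse[OF l2]) auto
  thus ?thesis by (simp add: inverse_eq_divide)
qed

lemma digits_to_freq:
  assumes io: "io \<omega>" and xi: "\<xi> > 0" and lim: "(\<lambda>n. real (S n \<omega>) / real n) \<longlonglongrightarrow> \<xi>"
  shows "(\<lambda>m. real (N m \<omega>) / real m) \<longlonglongrightarrow> 1/\<xi>"
proof -
  have fN: "filterlim (\<lambda>m. N m \<omega>) at_top sequentially"
    unfolding filterlim_at_top
  proof (intro allI)
    fix Z show "eventually (\<lambda>m. Z \<le> N m \<omega>) sequentially"
      unfolding eventually_sequentially using N_ge_iff[OF io, of Z] by blast
  qed
  have fN1: "filterlim (\<lambda>m. Suc (N m \<omega>)) at_top sequentially"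
    by (rule filterlim_compose[OF filterlim_Suc fN])
  have a: "(\<lambda>m. real (S (N m \<omega>) \<omega>) / real (N m \<omega>)) \<longlonglongrightarrow> \<xi>"
    by (rule filterlim_compose[OF lim fN])
  have b0: "(\<lambda>m. real (S (Suc (N m \<omega>)) \<omega>) / real (Suc (N m \<omega>))) \<longlonglongrightarrow> \<xi>"
    by (rule filterlim_compose[OF lim fN1])
  have c0: "(\<lambda>m. 1 / real (N m \<omega>)) \<longlonglongrightarrow> 0"
    by (rule filterlim_compose[OF lim_inverse_n' fN])
  have ev1: "eventually (\<lambda>m. 1 \<le> N m \<omega>) sequentially"
    using fN unfolding filterlim_at_top by blast
  have c: "(\<lambda>m. real (Suc (N m \<omega>)) / real (N m \<omega>)) \<longlonglongrightarrow> 1"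
  proof -
    have "(\<lambda>m. 1 + 1 / real (N m \<omega>)) \<longlonglongrightarrow> 1 + 0" by (intro tendsto_add tendsto_const c0)
    moreover have "eventually (\<lambda>m. 1 + 1 / real (N m \<omega>) = real (Suc (N m \<omega>)) / real (N m \<omega>)) sequentially"
      using ev1 by eventually_elim (simp add: field_simps)
    ultimately show ?thesis by (simp add: tendsto_cong)
  qed
  have b: "(\<lambda>m. real (S (Suc (N m \<omega>)) \<omega>) / real (N m \<omega>)) \<longlonglongrightarrow> \<xi>"
  proof -
    have "(\<lambda>m. real (S (Suc (N m \<omega>)) \<omega>) / real (Suc (N m \<omega>)) * (real (Suc (N m \<omega>)) / real (N m \<omega>))) \<longlonglongrightarrow> \<xi> * 1"
      by (rule tendsto_mult[OF b0 c])
    moreover have "eventually (\<lambda>m. real (S (Suc (N m \<omega>)) \<omega>) / real (Suc (N m \<omega>)) * (real (Suc (N m \<omega>)) / real (N m \<omega>)) = real (S (Suc (N m \<omega>)) \<omega>) / real (N m \<omega>)) sequentially"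
      using ev1 by eventually_elim (rule div_mult_cancel_aux, simp)
    ultimately show ?thesis by (simp add: tendsto_cong)
  qed
  have lo: "eventually (\<lambda>m. real (S (N m \<omega>) \<omega>) / real (N m \<omega>) \<le> real m / real (N m \<omega>)) sequentially"
    using ev1
  proof eventually_elim
    case (elim m)
    have "S (N m \<omega>) \<omega> \<le> m" using N_ge_iff[OF io, of "N m \<omega>" m] by simp
    thus ?case by (intro divide_right_mono) auto
  qed
  have hi: "eventually (\<lambda>m. real m / real (N m \<omega>) \<le> real (S (Suc (N m \<omega>)) \<omega>) / real (N m \<omega>)) sequentially"
    using ev1
  proof eventually_elim
    case (elim m)
    have "m < S (Suc (N m \<omega>)) \<omega>" using N_ge_iff[OF io, of "Suc (N m \<omega>)" m] by simp
    thus ?case by (intro divide_right_mono) auto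
  qed
  have sq: "(\<lambda>m. real m / real (N m \<omega>)) \<longlonglongrightarrow> \<xi>"
    by (rule tendsto_sandwich[OF lo hi a b])
  have "(\<lambda>m. inverse (real m / real (N m \<omega>))) \<longlonglongrightarrow> inverse \<xi>"
    using xi by (intro tendsto_inverse[OF sq]) auto
  thus ?thesis by (simp add: inverse_eq_divide)
qed

definition om :: "real \<Rightarrow> nat \<Rightarrow> bool" where
  "om x i = (\<lceil>2^(Suc i) * x\<rceil> = 2 * \<lceil>2^i * x\<rceil>)"

lemma ceil_step: "\<lceil>2^(Suc i) * x\<rceil> = 2 * \<lceil>2^i * (x::real)\<rceil> \<or> \<lceil>2^(Suc i) * x\<rceil> = 2 * \<lceil>2^i * x\<rceil> - 1"
proof -
  define c where "c = \<lceil>2^i * x\<rceil>"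
  define y where "y = 2^(Suc i) * x"
  have h: "of_int c - 1 < 2^i * x" "2^i * x \<le> of_int c" unfolding c_def using ceiling_correct by auto
  have y: "y = 2 * (2^i * x)" unfolding y_def by simp
  have A: "\<lceil>y\<rceil> \<le> 2 * c" using h y by (intro ceiling_le) simp
  have "real_of_int (2 * c - 2) < y" using h y by simp
  moreover have "y \<le> of_int \<lceil>y\<rceil>" by (rule le_of_int_ceiling)
  ultimately have "real_of_int (2 * c - 2) < of_int \<lceil>y\<rceil>" by linarith
  hence "2 * c - 2 < \<lceil>y\<rceil>" by (simp only: of_int_less_iff)
  with A show ?thesis unfolding c_def[symmetric] y_def[symmetric] by linarith
qed

lemma kk_om: "x \<in> {0<..1} \<Longrightarrow> int (kk m (om x)) = \<lceil>2^m * x\<rceil> - 1"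
proof (induction m)
  case 0
  have "\<lceil>x\<rceil> = 1" using 0 by (simp add: ceiling_eq_iff)
  then show ?case by simp
next
  case (Suc m)
  have "int (kk (Suc m) (om x)) = 2 * int (kk m (om x)) + (if om x m then 1 else 0)" by simp
  also have "\<dots> = 2 * (\<lceil>2^m * x\<rceil> - 1) + (if om x m then 1 else 0)" using Suc by simp
  also have "\<dots> = \<lceil>2^(Suc m) * x\<rceil> - 1" using ceil_step[of m x] unfolding om_def by auto
  finally show ?case .
qed

lemma kk_om_real: "x \<in> {0<..1} \<Longrightarrow> real (kk m (om x)) = of_int \<lceil>2^m * x\<rceil> - 1"
proof -
  assume "x \<in> {0<..1}"
  hence "real_of_int (int (kk m (om x))) = real_of_int (\<lceil>2^m * x\<rceil> - 1)" using kk_om by metis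
  thus ?thesis by simp
qed

lemma val_om: assumes x: "x \<in> {0<..1}" shows "val (om x) = x"
proof (rule ccontr)
  assume ne: "val (om x) \<noteq> x"
  have bnd: "\<bar>val (om x) - x\<bar> \<le> (1/2)^m" for m
  proof -
    define c where "c = real_of_int \<lceil>2^m * x\<rceil>"
    have k: "real (kk m (om x)) = c - 1" unfolding c_def by (rule kk_om_real[OF x])
    have v1: "(c - 1) / 2^m \<le> val (om x)" "val (om x) \<le> c / 2^m"
      using val_bounds[where m=m and \<omega>="om x"] k by auto
    have "c - 1 < 2^m * x" "2^m * x \<le> c" unfolding c_def using ceiling_correct by auto
    hence x1: "(c - 1) / 2^m < x" "x \<le> c / 2^m" by (simp_all add: field_simps)
    have "\<bar>val (om x) - x\<bar> \<le> c / 2^m - (c - 1) / 2^m" using v1 x1 by linarith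
    also have "\<dots> = (1/2)^m" by (simp add: field_simps)
    finally show ?thesis .
  qed
  obtain m where "(1/2::real)^m < \<bar>val (om x) - x\<bar>"
    using real_arch_pow_inv[of "\<bar>val (om x) - x\<bar>" "1/2"] ne by auto
  with bnd[of m] show False by linarith
qed

lemma io_om: assumes x: "x \<in> {0<..1}" shows "io (om x)"
proof (rule ccontr)
  assume "\<not> io (om x)"
  then obtain n where n: "\<And>i. i \<ge> n \<Longrightarrow> \<not> om x i" unfolding io_def by auto
  have z: "val (\<lambda>i. om x (i + n)) = 0" by (rule val_zero) (use n in auto)
  have "x = real (kk n (om x)) / 2^n" using val_split[of "om x" n] z val_om[OF x] by simp
  also have "\<dots> = (of_int \<lceil>2^n * x\<rceil> - 1) / 2^n" using kk_om_real[OF x] by simp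
  also have "\<dots> < x"
  proof -
    have "of_int \<lceil>2^n * x\<rceil> - 1 < 2^n * x" using ceiling_correct by auto
    thus ?thesis by (simp add: field_simps)
  qed
  finally show False by simp
qed

lemma Elevel_freq:
  assumes x: "x \<in> Elevel \<xi>" and xi: "\<xi> > 0"
  shows "io (om x) \<and> val (om x) = x \<and> (\<lambda>m. real (N m (om x)) / real m) \<longlonglongrightarrow> 1/\<xi>"
proof -
  have x1: "x \<in> {0<..1}" and k: "khintchine_exp_eq x \<xi>" using x unfolding Elevel_def by auto
  have io: "io (om x)" by (rule io_om[OF x1])
  have v: "val (om x) = x" by (rule val_om[OF x1])
  have "(\<lambda>n. (\<Sum>j=1..n. real (digit j (val (om x)))) / real n) \<longlonglongrightarrow> \<xi>"
    using k unfolding khintchine_exp_eq_def v .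
  hence "(\<lambda>n. real (S n (om x)) / real n) \<longlonglongrightarrow> \<xi>" unfolding sum_digits[OF io] .
  thus ?thesis using io v digits_to_freq[OF io xi] by simp
qed

lemma freq_Elevel:
  assumes io: "io \<omega>" and p: "p > 0" and lim: "(\<lambda>m. real (N m \<omega>) / real m) \<longlonglongrightarrow> p"
  shows "val \<omega> \<in> Elevel (1/p)"
proof -
  have "(\<lambda>n. real (S n \<omega>) / real n) \<longlonglongrightarrow> 1/p" by (rule freq_to_digits[OF io p lim])
  hence "khintchine_exp_eq (val \<omega>) (1/p)"
    unfolding khintchine_exp_eq_def sum_digits[OF io] .
  thus ?thesis unfolding Elevel_def using val_in[OF io] by simp
qed

definition covers :: "real set \<Rightarrow> real \<Rightarrow> (nat \<Rightarrow> real set) \<Rightarrow> bool" where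
  "covers A \<delta> C \<longleftrightarrow> A \<subseteq> (\<Union>i. C i) \<and> (\<forall>i. bounded (C i) \<and> diameter (C i) \<le> \<delta>)"

definition csum :: "real \<Rightarrow> (nat \<Rightarrow> real set) \<Rightarrow> ennreal" where
  "csum s C = (\<Sum>i. ennreal (diameter (C i) powr s))"

definition Zs :: "real \<Rightarrow> real set \<Rightarrow> bool" where
  "Zs s A \<longleftrightarrow> (\<forall>\<delta>>0. \<forall>\<eta>>0. \<exists>C. covers A \<delta> C \<and> csum s C \<le> ennreal \<eta>)"

lemma content_le: "covers A \<delta> C \<Longrightarrow> hausdorff_content s \<delta> A \<le> csum s C"
  unfolding hausdorff_content_def csum_def covers_def by (rule INF_lower) auto

lemma content_ge: "(\<And>C. covers A \<delta> C \<Longrightarrow> c \<le> csum s C) \<Longrightarrow> c \<le> hausdorff_content s \<delta> A"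
  unfolding hausdorff_content_def csum_def covers_def by (rule INF_greatest) auto

lemma Zs_imp: assumes "Zs s A" shows "hausdorff_measure s A = 0"
proof -
  have "hausdorff_content s \<delta> A = 0" if d: "\<delta> > 0" for \<delta>
  proof -
    have H: "hausdorff_content s \<delta> A \<le> 0 + ennreal e" if e: "0 < e" for e
    proof -
      obtain C where "covers A \<delta> C" "csum s C \<le> ennreal e" using assms d e unfolding Zs_def by blast
      thus ?thesis using content_le[of A \<delta> C s] by simp
    qed
    have "hausdorff_content s \<delta> A \<le> 0" by (rule ennreal_le_epsilon, rule H) simp
    thus ?thesis by simp
  qed
  hence H2: "\<And>\<delta>. \<delta> \<in> {0<..} \<Longrightarrow> hausdorff_content s \<delta> A \<le> 0" by simp
  have "(SUP \<delta>\<in>{0<..}. hausdorff_content s \<delta> A) \<le> 0" by (rule SUP_least) (rule H2)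
  thus ?thesis unfolding hausdorff_measure_def by simp
qed

lemma pos_imp:
  assumes d: "\<delta> > 0" and c: "c > 0" and H: "\<And>C. covers A \<delta> C \<Longrightarrow> ennreal c \<le> csum s C"
  shows "hausdorff_measure s A \<noteq> 0"
proof -
  have "ennreal c \<le> hausdorff_content s \<delta> A" by (rule content_ge[OF H])
  also have "\<dots> \<le> hausdorff_measure s A" unfolding hausdorff_measure_def
    by (rule SUP_upper) (use d in auto)
  finally show ?thesis using c by auto
qed

lemma covers_mono: "A \<subseteq> B \<Longrightarrow> covers B \<delta> C \<Longrightarrow> covers A \<delta> C"
  unfolding covers_def by (meson order_trans)

lemma Zs_mono: assumes "A \<subseteq> B" "Zs s B" shows "Zs s A"
  unfolding Zs_def
proof (intro allI impI)
  fix \<delta> \<eta> :: real assume "\<delta> > 0" "\<eta> > 0"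
  then obtain C where "covers B \<delta> C" "csum s C \<le> ennreal \<eta>" using assms(2) unfolding Zs_def by blast
  thus "\<exists>C. covers A \<delta> C \<and> csum s C \<le> ennreal \<eta>" using covers_mono[OF assms(1)] by blast
qed

lemma suminf_prod_decode:
  fixes f :: "nat \<times> nat \<Rightarrow> ennreal"
  shows "(\<Sum>n. f (prod_decode n)) = (\<Sum>a. \<Sum>b. f (a, b))"
proof -
  have "(\<Sum>n. f (prod_decode n)) = integral\<^sup>N (count_space UNIV) (\<lambda>n. f (prod_decode n))"
    by (rule nn_integral_count_space_nat[symmetric])
  also have "\<dots> = integral\<^sup>N (count_space UNIV) f"
    by (rule nn_integral_bij_count_space) (rule bij_prod_decode)
  also have "\<dots> = (\<integral>\<^sup>+ a. \<integral>\<^sup>+ b. f (a, b) \<partial>count_space UNIV \<partial>count_space UNIV)"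
    by (rule nn_integral_fst_count_space[symmetric])
  also have "\<dots> = (\<integral>\<^sup>+ a. (\<Sum>b. f (a, b)) \<partial>count_space UNIV)"
    by (simp only: nn_integral_count_space_nat)
  also have "\<dots> = (\<Sum>a. \<Sum>b. f (a, b))"
    by (rule nn_integral_count_space_nat)
  finally show ?thesis .
qed

lemma suminf_half_eta: "(\<Sum>M. ennreal (\<eta> * (1/2)^Suc M)) = ennreal \<eta>" if "\<eta> \<ge> 0" for \<eta> :: real
proof -
  have s: "summable (\<lambda>M. \<eta> * (1/2::real)^Suc M)"
    by (rule summable_mult[OF summable_half])
  have "(\<Sum>M. \<eta> * (1/2::real)^Suc M) = \<eta> * (\<Sum>M. (1/2::real)^Suc M)"
    by (rule suminf_mult[OF summable_half])
  also have "\<dots> = \<eta>" by (simp only: suminf_half mult_1_right)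
  finally have e: "(\<Sum>M. \<eta> * (1/2::real)^Suc M) = \<eta>" .
  have "(\<Sum>M. ennreal (\<eta> * (1/2)^Suc M)) = ennreal (\<Sum>M. \<eta> * (1/2::real)^Suc M)"
    by (rule suminf_ennreal2[OF _ s]) (use that in simp)
  thus ?thesis using e by simp
qed

lemma Zs_UN: assumes Z: "\<And>M::nat. Zs s (A M)" shows "Zs s (\<Union>M. A M)"
  unfolding Zs_def
proof (intro allI impI)
  fix \<delta> \<eta> :: real assume d: "\<delta> > 0" and e: "\<eta> > 0"
  have "\<forall>M. \<exists>C. covers (A M) \<delta> C \<and> csum s C \<le> ennreal (\<eta> * (1/2)^Suc M)"
  proof
    fix M
    have "\<eta> * (1/2)^Suc M > 0" using e by simp
    thus "\<exists>C. covers (A M) \<delta> C \<and> csum s C \<le> ennreal (\<eta> * (1/2)^Suc M)"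
      using Z[of M] d unfolding Zs_def by blast
  qed
  from choice[OF this] obtain Cf where Cf0: "\<forall>M. covers (A M) \<delta> (Cf M) \<and> csum s (Cf M) \<le> ennreal (\<eta> * (1/2)^Suc M)"
    by blast
  hence Cf: "\<And>M. covers (A M) \<delta> (Cf M) \<and> csum s (Cf M) \<le> ennreal (\<eta> * (1/2)^Suc M)" by blast
  define C where "C n = (case prod_decode n of (M, i) \<Rightarrow> Cf M i)" for n
  have CC: "C (prod_encode (M, i)) = Cf M i" for M i unfolding C_def by simp
  have sub: "(\<Union>M. A M) \<subseteq> (\<Union>n. C n)"
  proof
    fix x assume "x \<in> (\<Union>M. A M)"
    then obtain M where "x \<in> A M" by blast
    then obtain i where "x \<in> Cf M i" using Cf[of M] unfolding covers_def by blast
    thus "x \<in> (\<Union>n. C n)" using CC by blast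
  qed
  have bd: "\<forall>n. bounded (C n) \<and> diameter (C n) \<le> \<delta>"
  proof
    fix n
    obtain M i where "prod_decode n = (M, i)" by (cases "prod_decode n")
    hence "C n = Cf M i" unfolding C_def by simp
    thus "bounded (C n) \<and> diameter (C n) \<le> \<delta>" using Cf[of M] unfolding covers_def by simp
  qed
  have "covers (\<Union>M. A M) \<delta> C" unfolding covers_def by (rule conjI[OF sub bd])
  moreover have "csum s C \<le> ennreal \<eta>"
  proof -
    have "csum s C = (\<Sum>n. (\<lambda>(M,i). ennreal (diameter (Cf M i) powr s)) (prod_decode n))"
      unfolding csum_def C_def by (intro suminf_cong) (simp add: case_prod_unfold)
    also have "\<dots> = (\<Sum>M. \<Sum>i. ennreal (diameter (Cf M i) powr s))"
      by (subst suminf_prod_decode) simp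
    also have "\<dots> = (\<Sum>M. csum s (Cf M))" unfolding csum_def ..
    also have "\<dots> \<le> (\<Sum>M. ennreal (\<eta> * (1/2)^Suc M))"
      by (rule suminf_le) (use Cf in blast, rule summableI, rule summableI)
    also have "\<dots> = ennreal \<eta>" by (rule suminf_half_eta) (use e in simp)
    finally show ?thesis .
  qed
  ultimately show "\<exists>C. covers (\<Union>M. A M) \<delta> C \<and> csum s C \<le> ennreal \<eta>" by blast
qed

lemma sum_pow_subsets:
  fixes q :: real
  shows "(\<Sum>U\<in>Pow {..<m}. q ^ card U * (1-q) ^ (m - card U)) = 1"
proof -
  have "(\<Prod>i\<in>{..<m}. q + (1-q)) = (\<Sum>U\<in>Pow {..<m}. (\<Prod>i\<in>U. q) * (\<Prod>i\<in>{..<m} - U. 1-q))"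
    by (rule prod_add) simp
  also have "\<dots> = (\<Sum>U\<in>Pow {..<m}. q ^ card U * (1-q) ^ (m - card U))"
  proof (rule sum.cong[OF refl])
    fix U assume "U \<in> Pow {..<m}"
    hence "U \<subseteq> {..<m}" by simp
    hence "card ({..<m} - U) = m - card U" by (simp add: card_Diff_subset finite_subset)
    thus "(\<Prod>i\<in>U. q) * (\<Prod>i\<in>{..<m} - U. 1-q) = q ^ card U * (1-q) ^ (m - card U)" by simp
  qed
  finally show ?thesis by simp
qed

lemma card_good:
  fixes p q \<epsilon> :: real and m :: nat
  assumes q: "0 < q" "q < 1" and eps: "\<epsilon> \<ge> 0"
  shows "real (card {U. U \<subseteq> {..<m} \<and> \<bar>real (card U) - p * m\<bar> \<le> \<epsilon> * m})
           \<le> exp (m * ((- p * ln q - (1-p) * ln (1-q)) + \<epsilon> * \<bar>ln q - ln (1-q)\<bar>))"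
proof -
  define G where "G = {U. U \<subseteq> {..<m} \<and> \<bar>real (card U) - p * m\<bar> \<le> \<epsilon> * m}"
  define w where "w U = q ^ card U * (1-q) ^ (m - card U)" for U :: "nat set"
  define L where "L = \<bar>ln q - ln (1-q)\<bar>"
  define \<phi> where "\<phi> = - p * ln q - (1-p) * ln (1-q)"
  define E where "E = exp (m * (\<phi> + \<epsilon> * L))"
  have GP: "G \<subseteq> Pow {..<m}" unfolding G_def by auto
  have fin: "finite G" using GP finite_subset by blast
  have wnn: "0 \<le> w U" for U unfolding w_def using q by simp
  have key: "1 \<le> w U * E" if U: "U \<in> G" for U
  proof -
    define k where "k = card U"
    have km: "k \<le> m" unfolding k_def using card_mono[of "{..<m}" U] U unfolding G_def by auto
    have dev: "\<bar>real k - p * m\<bar> \<le> \<epsilon> * m" using U unfolding G_def k_def by simp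
    have w: "w U = exp (real k * ln q + real (m - k) * ln (1-q))"
      unfolding w_def k_def[symmetric] using q by (simp add: exp_add exp_of_nat_mult)
    have e1: "real k * ln q + real (m - k) * ln (1-q) + m * \<phi> = (real k - p*m) * (ln q - ln (1-q))"
      using km unfolding \<phi>_def by (simp add: of_nat_diff algebra_simps)
    have "\<bar>(real k - p*m) * (ln q - ln (1-q))\<bar> \<le> \<epsilon> * m * L"
      unfolding abs_mult L_def by (rule mult_right_mono[OF dev]) simp
    hence "0 \<le> real k * ln q + real (m - k) * ln (1-q) + m * (\<phi> + \<epsilon> * L)"
      using e1 by (simp add: algebra_simps)
    hence "1 \<le> exp (real k * ln q + real (m - k) * ln (1-q) + m * (\<phi> + \<epsilon> * L))" by simp
    thus ?thesis unfolding w E_def by (simp add: exp_add)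
  qed
  have "real (card G) = (\<Sum>U\<in>G. 1)" by simp
  also have "\<dots> \<le> (\<Sum>U\<in>G. w U * E)" by (rule sum_mono) (rule key)
  also have "\<dots> \<le> (\<Sum>U\<in>Pow {..<m}. w U * E)"
    by (rule sum_mono2) (use GP wnn in \<open>auto simp: E_def\<close>)
  also have "\<dots> = E * (\<Sum>U\<in>Pow {..<m}. w U)" by (simp add: sum_distrib_left mult.commute)
  also have "\<dots> = E" unfolding w_def by (simp add: sum_pow_subsets)
  finally show ?thesis unfolding G_def E_def \<phi>_def L_def .
qed

definition Aset :: "real \<Rightarrow> real \<Rightarrow> nat \<Rightarrow> real set" where
  "Aset p \<epsilon> M = {x \<in> {0<..1}. \<forall>m\<ge>M. \<bar>real (N m (om x)) - p * m\<bar> \<le> \<epsilon> * m}"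

lemma powr_half: "(1 / 2^m :: real) powr s = exp (- (m * s * ln 2))"
proof -
  have "ln (1 / 2^m :: real) = - (m * ln 2)" by (simp add: ln_div ln_realpow)
  thus ?thesis by (simp add: powr_def)
qed

lemma Zs_Aset:
  fixes p q \<epsilon> s :: real and M :: nat
  assumes q: "0 < q" "q < 1" and eps: "\<epsilon> > 0"
    and rate: "(- p * ln q - (1-p) * ln (1-q)) + \<epsilon> * \<bar>ln q - ln (1-q)\<bar> < s * ln 2"
  shows "Zs s (Aset p \<epsilon> M)"
  unfolding Zs_def
proof (intro allI impI)
  fix \<delta> \<eta> :: real assume d: "\<delta> > 0" and e: "\<eta> > 0"
  define \<phi> where "\<phi> = (- p * ln q - (1-p) * ln (1-q)) + \<epsilon> * \<bar>ln q - ln (1-q)\<bar>"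
  define r where "r = \<phi> - s * ln 2"
  have r: "r < 0" using rate unfolding r_def \<phi>_def by simp
  have l1: "(\<lambda>m. exp r ^ m) \<longlonglongrightarrow> 0" by (rule LIMSEQ_power_zero) (use r in simp)
  have l2: "(\<lambda>m. (1/2::real) ^ m) \<longlonglongrightarrow> 0" by (rule LIMSEQ_power_zero) simp
  have "eventually (\<lambda>m. exp r ^ m < \<eta>) sequentially" using order_tendstoD(2)[OF l1 e] .
  moreover have "eventually (\<lambda>m. (1/2::real)^m < \<delta>) sequentially" using order_tendstoD(2)[OF l2 d] .
  moreover have "eventually (\<lambda>m. M \<le> m) sequentially" by (rule eventually_ge_at_top)
  ultimately have "eventually (\<lambda>m. exp r ^ m < \<eta> \<and> (1/2::real)^m < \<delta> \<and> M \<le> m) sequentially"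
    by eventually_elim auto
  then obtain N0 where "\<forall>n\<ge>N0. exp r ^ n < \<eta> \<and> (1/2::real)^n < \<delta> \<and> M \<le> n"
    unfolding eventually_sequentially by blast
  then obtain m where m: "exp r ^ m < \<eta>" "(1/2::real)^m < \<delta>" "M \<le> m" by blast
  define G where "G = {U. U \<subseteq> {..<m} \<and> \<bar>real (card U) - p * m\<bar> \<le> \<epsilon> * m}"
  define K where "K = (\<lambda>U. kk m (\<lambda>i. i \<in> U)) ` G"
  define C where "C k = (if k \<in> K then {real k / 2^m .. (real k + 1) / 2^m} else {})" for k
  have finG: "finite G" unfolding G_def by (rule finite_subset[of _ "Pow {..<m}"]) auto
  have finK: "finite K" unfolding K_def using finG by simp
  have cardK: "card K \<le> card G" unfolding K_def by (rule card_image_le[OF finG])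
  have cov: "Aset p \<epsilon> M \<subseteq> (\<Union>k. C k)"
  proof
    fix x assume x: "x \<in> Aset p \<epsilon> M"
    have x1: "x \<in> {0<..1}" and dev: "\<bar>real (N m (om x)) - p * m\<bar> \<le> \<epsilon> * m"
      using x m(3) unfolding Aset_def by auto
    define U where "U = {i. i < m \<and> om x i}"
    have cU: "card U = N m (om x)" unfolding U_def N_def ..
    have UG: "U \<in> G" unfolding G_def using dev cU by (auto simp: U_def)
    have kk: "kk m (om x) = kk m (\<lambda>i. i \<in> U)" by (rule kk_cong) (simp add: U_def)
    have "kk m (om x) \<in> K" unfolding K_def kk using UG by blast
    moreover have "x \<in> {real (kk m (om x)) / 2^m .. (real (kk m (om x)) + 1) / 2^m}"
      using val_bounds[where m=m and \<omega>="om x"] val_om[OF x1] by simp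
    ultimately have "x \<in> C (kk m (om x))" unfolding C_def by simp
    thus "x \<in> (\<Union>k. C k)" by blast
  qed
  have diamC: "diameter (C k) = (if k \<in> K then 1 / 2^m else 0)" for k
  proof (cases "k \<in> K")
    case True
    have "(real k + 1) / 2^m - real k / 2^m = 1 / 2^m" by (simp add: field_simps)
    moreover have "real k / 2^m \<le> (real k + 1) / 2^m" by (simp add: divide_right_mono)
    ultimately show ?thesis using True unfolding C_def by (simp add: diameter_closed_interval)
  qed (simp add: C_def)
  have bd: "\<forall>k. bounded (C k) \<and> diameter (C k) \<le> \<delta>"
  proof
    fix k
    have "bounded (C k)" unfolding C_def by simp
    moreover have "diameter (C k) \<le> \<delta>"
      using m(2) d unfolding diamC by (simp add: power_one_over)
    ultimately show "bounded (C k) \<and> diameter (C k) \<le> \<delta>" ..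
  qed
  have covs: "covers (Aset p \<epsilon> M) \<delta> C" unfolding covers_def by (rule conjI[OF cov bd])
  have "csum s C = (\<Sum>k\<in>K. ennreal (diameter (C k) powr s))"
    unfolding csum_def by (rule suminf_finite[OF finK]) (simp add: diamC)
  also have "\<dots> = (\<Sum>k\<in>K. ennreal ((1 / 2^m) powr s))" by (rule sum.cong) (simp_all add: diamC)
  also have "\<dots> = ennreal (\<Sum>k\<in>K. (1 / 2^m) powr s)" by (rule sum_ennreal) simp
  also have "(\<Sum>k\<in>K. (1 / 2^m :: real) powr s) = real (card K) * exp (- (m * s * ln 2))"
    by (simp add: powr_half)
  also have "\<dots> \<le> exp (m * \<phi>) * exp (- (m * s * ln 2))"
  proof (rule mult_right_mono)
    have "real (card K) \<le> real (card G)" using cardK by simp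
    also have "\<dots> \<le> exp (m * \<phi>)" unfolding G_def \<phi>_def by (rule card_good[OF q]) (use eps in simp)
    finally show "real (card K) \<le> exp (m * \<phi>)" .
  qed simp
  also have "exp (m * \<phi>) * exp (- (m * s * ln 2)) = exp r ^ m"
    unfolding r_def by (simp add: exp_add[symmetric] exp_of_nat_mult[symmetric] algebra_simps)
  finally have "csum s C \<le> ennreal \<eta>" using m(1) by (simp add: ennreal_leI order_trans)
  with covs show "\<exists>C. covers (Aset p \<epsilon> M) \<delta> C \<and> csum s C \<le> ennreal \<eta>" by blast
qed

lemma Elevel_sub_Aset:
  assumes xi: "\<xi> > 0" and eps: "\<epsilon> > 0"
  shows "Elevel \<xi> \<subseteq> (\<Union>M. Aset (1/\<xi>) \<epsilon> M)"
proof
  fix x assume x: "x \<in> Elevel \<xi>"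
  have x1: "x \<in> {0<..1}" using x unfolding Elevel_def by auto
  have lim: "(\<lambda>m. real (N m (om x)) / real m) \<longlonglongrightarrow> 1/\<xi>" using Elevel_freq[OF x xi] by simp
  have "eventually (\<lambda>m. dist (real (N m (om x)) / real m) (1/\<xi>) < \<epsilon>) sequentially"
    using tendstoD[OF lim eps] .
  then obtain M where M: "\<And>m. m \<ge> M \<Longrightarrow> \<bar>real (N m (om x)) / real m - 1/\<xi>\<bar> < \<epsilon>"
    unfolding eventually_sequentially dist_real_def by blast
  have "\<bar>real (N m (om x)) - 1/\<xi> * m\<bar> \<le> \<epsilon> * m" if m: "m \<ge> M" for m
  proof (cases "m = 0")
    case True then show ?thesis by simp
  next
    case False
    hence mp: "real m > 0" by simp
    have "real (N m (om x)) - 1/\<xi> * m = real m * (real (N m (om x)) / real m - 1/\<xi>)"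
      using mp by (simp add: field_simps)
    hence "\<bar>real (N m (om x)) - 1/\<xi> * m\<bar> = real m * \<bar>real (N m (om x)) / real m - 1/\<xi>\<bar>"
      using mp by (simp add: abs_mult)
    also have "\<dots> \<le> real m * \<epsilon>" using M[OF m] mp by (intro mult_left_mono) auto
    finally show ?thesis by (simp add: mult.commute)
  qed
  hence "x \<in> Aset (1/\<xi>) \<epsilon> M" unfolding Aset_def using x1 by simp
  thus "x \<in> (\<Union>M. Aset (1/\<xi>) \<epsilon> M)" by blast
qed

lemma Zs_Elevel:
  fixes \<xi> q s :: real
  assumes xi: "\<xi> > 0" and q: "0 < q" "q < 1"
    and rate: "- (1/\<xi>) * ln q - (1 - 1/\<xi>) * ln (1-q) < s * ln 2"
  shows "Zs s (Elevel \<xi>)"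
proof -
  define L where "L = \<bar>ln q - ln (1-q)\<bar>"
  define g where "g = s * ln 2 - (- (1/\<xi>) * ln q - (1 - 1/\<xi>) * ln (1-q))"
  have g: "g > 0" using rate unfolding g_def by simp
  define \<epsilon> where "\<epsilon> = g / (2 * (L + 1))"
  have L0: "L \<ge> 0" unfolding L_def by simp
  have eps: "\<epsilon> > 0" unfolding \<epsilon>_def using g L0 by simp
  have "\<epsilon> * L \<le> \<epsilon> * (L + 1)" using eps by simp
  also have "\<epsilon> * (L + 1) = g / 2" unfolding \<epsilon>_def using L0 by (simp add: field_simps)
  finally have eL: "\<epsilon> * L < g" using g by simp
  have "Zs s (Aset (1/\<xi>) \<epsilon> M)" for M
    by (rule Zs_Aset[OF q eps]) (use eL in \<open>simp add: g_def L_def\<close>)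
  hence "Zs s (\<Union>M. Aset (1/\<xi>) \<epsilon> M)" by (rule Zs_UN)
  thus ?thesis by (rule Zs_mono[OF Elevel_sub_Aset[OF xi eps]])
qed

definition B :: "real \<Rightarrow> bool measure" where "B p = measure_pmf (bernoulli_pmf p)"
definition nu :: "real \<Rightarrow> (nat \<Rightarrow> bool) measure" where "nu p = PiM UNIV (\<lambda>_. B p)"

lemma PP: "product_prob_space (\<lambda>_::nat. B p)"
  unfolding B_def by unfold_locales

lemma nu_prob: "prob_space (nu p)"
  unfolding nu_def B_def by (rule prob_space_PiM) (rule measure_pmf.prob_space_axioms)

lemma space_nu: "space (nu p) = UNIV"
  by (simp add: nu_def space_PiM B_def)

lemma sets_B: "sets (B p) = UNIV" by (simp add: B_def)

lemma meas_comp [measurable]: "(\<lambda>\<omega>. \<omega> i) \<in> measurable (nu p) (count_space UNIV)"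
proof -
  have "(\<lambda>\<omega>. \<omega> i) \<in> measurable (nu p) (B p)" unfolding nu_def by (rule measurable_component_singleton) simp
  moreover have "measurable (nu p) (B p) = measurable (nu p) (count_space UNIV)"
    by (rule measurable_cong_sets) (simp_all add: sets_B)
  ultimately show ?thesis by simp
qed

definition wt :: "real \<Rightarrow> nat \<Rightarrow> (nat \<Rightarrow> bool) \<Rightarrow> real" where
  "wt p m \<omega> = (\<Prod>i<m. if \<omega> i then p else 1 - p)"

lemma wt_eq: "wt p m \<omega> = p ^ N m \<omega> * (1-p) ^ (m - N m \<omega>)"
proof (induction m)
  case 0 then show ?case by (simp add: wt_def)
next
  case (Suc m)
  have le: "N m \<omega> \<le> m" by (rule N_le)
  have "wt p (Suc m) \<omega> = wt p m \<omega> * (if \<omega> m then p else 1 - p)" by (simp add: wt_def)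
  also have "\<dots> = p ^ N (Suc m) \<omega> * (1-p) ^ (Suc m - N (Suc m) \<omega>)"
    using le by (cases "\<omega> m") (simp_all add: Suc N_Suc Suc_diff_le algebra_simps)
  finally show ?case .
qed

lemma wt_nonneg: "0 \<le> p \<Longrightarrow> p \<le> 1 \<Longrightarrow> 0 \<le> wt p m \<omega>"
  unfolding wt_def by (rule prod_nonneg) auto

lemma cyl_meas: "{\<omega> \<in> space (nu p). \<forall>i\<in>{..<m}. \<omega> i = b i} \<in> sets (nu p)"
  by measurable

lemma cyl_emeasure:
  assumes p: "0 \<le> p" "p \<le> 1"
  shows "emeasure (nu p) {\<omega> \<in> space (nu p). \<forall>i\<in>{..<m}. \<omega> i = b i} = ennreal (wt p m b)"
proof -
  interpret P: product_prob_space "\<lambda>_::nat. B p" UNIV by (rule PP)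
  have "{\<omega> \<in> space (nu p). \<forall>i\<in>{..<m}. \<omega> i = b i}
        = {\<omega> \<in> space (PiM UNIV (\<lambda>_. B p)). \<forall>i\<in>{..<m}. \<omega> i \<in> {b i}}" unfolding nu_def by simp
  hence "emeasure (nu p) {\<omega> \<in> space (nu p). \<forall>i\<in>{..<m}. \<omega> i = b i}
        = emeasure (PiM UNIV (\<lambda>_. B p)) {\<omega> \<in> space (PiM UNIV (\<lambda>_. B p)). \<forall>i\<in>{..<m}. \<omega> i \<in> {b i}}"
    unfolding nu_def by simp
  also have "\<dots> = (\<Prod>i\<in>{..<m}. emeasure (B p) {b i})"
    by (rule P.emeasure_PiM_Collect) (auto simp: sets_B)
  also have "\<dots> = (\<Prod>i\<in>{..<m}. ennreal (if b i then p else 1 - p))"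
    using p by (intro prod.cong refl) (simp add: B_def emeasure_pmf_single)
  also have "\<dots> = ennreal (wt p m b)" unfolding wt_def using p by (subst prod_ennreal) auto
  finally show ?thesis .
qed

lemma N_real_sum: "real (N n \<omega>) = (\<Sum>i<n. if \<omega> i then 1 else 0)"
  by (induction n) (simp_all add: N_Suc)

lemma N_meas [measurable]: "(\<lambda>\<omega>. real (N n \<omega>)) \<in> borel_measurable (nu p)"
  unfolding N_real_sum by measurable

lemma sum_pow_subsets2:
  fixes a b :: real
  shows "(\<Sum>U\<in>Pow {..<m}. a ^ card U * b ^ (m - card U)) = (a + b) ^ m"
proof -
  have "(\<Prod>i\<in>{..<m}. a + b) = (\<Sum>U\<in>Pow {..<m}. (\<Prod>i\<in>U. a) * (\<Prod>i\<in>{..<m} - U. b))"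
    by (rule prod_add) simp
  also have "\<dots> = (\<Sum>U\<in>Pow {..<m}. a ^ card U * b ^ (m - card U))"
  proof (rule sum.cong[OF refl])
    fix U assume "U \<in> Pow {..<m}"
    hence "U \<subseteq> {..<m}" by simp
    hence "card ({..<m} - U) = m - card U" by (simp add: card_Diff_subset finite_subset)
    thus "(\<Prod>i\<in>U. a) * (\<Prod>i\<in>{..<m} - U. b) = a ^ card U * b ^ (m - card U)" by simp
  qed
  finally show ?thesis by simp
qed

lemma N_of_set: "U \<subseteq> {..<n} \<Longrightarrow> N n (\<lambda>i. i \<in> U) = card U"
proof -
  assume "U \<subseteq> {..<n}"
  hence "{i. i < n \<and> i \<in> U} = U" by auto
  thus ?thesis unfolding N_def by simp
qed

lemma event_bound:
  fixes p l a :: real and n :: nat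
  assumes p: "0 \<le> p" "p \<le> 1" and l: "0 < l"
    and H: "\<And>k. k \<le> n \<Longrightarrow> P k \<Longrightarrow> 1 \<le> l ^ k * l powr (- (a * n))"
  shows "emeasure (nu p) {\<omega> \<in> space (nu p). P (N n \<omega>)} \<le> ennreal ((l powr (-a) * (p*l + 1 - p))^n)"
proof -
  define G where "G = {U. U \<subseteq> {..<n} \<and> P (card U)}"
  define cyl where "cyl U = {\<omega> \<in> space (nu p). \<forall>i\<in>{..<n}. \<omega> i = (i \<in> U)}" for U
  have GP: "G \<subseteq> Pow {..<n}" unfolding G_def by auto
  have finG: "finite G" using GP finite_subset by blast
  have sub: "{\<omega> \<in> space (nu p). P (N n \<omega>)} \<subseteq> (\<Union>U\<in>G. cyl U)"
  proof
    fix \<omega> assume \<omega>: "\<omega> \<in> {\<omega> \<in> space (nu p). P (N n \<omega>)}"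
    define U where "U = {i. i < n \<and> \<omega> i}"
    have "card U = N n \<omega>" unfolding U_def N_def ..
    hence "U \<in> G" using \<omega> unfolding G_def U_def by auto
    moreover have "\<omega> \<in> cyl U" unfolding cyl_def U_def using \<omega> by auto
    ultimately show "\<omega> \<in> (\<Union>U\<in>G. cyl U)" by blast
  qed
  have "emeasure (nu p) {\<omega> \<in> space (nu p). P (N n \<omega>)} \<le> emeasure (nu p) (\<Union>U\<in>G. cyl U)"
    by (rule emeasure_mono[OF sub]) (use finG in \<open>auto simp: cyl_def intro!: sets.finite_UN cyl_meas\<close>)
  also have "\<dots> \<le> (\<Sum>U\<in>G. emeasure (nu p) (cyl U))"
    by (rule emeasure_subadditive_finite[OF finG]) (auto simp: cyl_def intro!: cyl_meas)
  also have "\<dots> = (\<Sum>U\<in>G. ennreal (p ^ card U * (1-p) ^ (n - card U)))"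
  proof (rule sum.cong[OF refl])
    fix U assume "U \<in> G"
    hence U: "U \<subseteq> {..<n}" unfolding G_def by simp
    show "emeasure (nu p) (cyl U) = ennreal (p ^ card U * (1-p) ^ (n - card U))"
      unfolding cyl_def cyl_emeasure[OF p] wt_eq N_of_set[OF U] ..
  qed
  also have "\<dots> = ennreal (\<Sum>U\<in>G. p ^ card U * (1-p) ^ (n - card U))"
    by (rule sum_ennreal) (use p in simp)
  also have "(\<Sum>U\<in>G. p ^ card U * (1-p) ^ (n - card U))
      \<le> (\<Sum>U\<in>G. p ^ card U * (1-p) ^ (n - card U) * (l ^ card U * l powr (- (a * n))))"
  proof (rule sum_mono)
    fix U assume "U \<in> G"
    hence "1 \<le> l ^ card U * l powr (- (a * n))" unfolding G_def
      using H card_mono[of "{..<n}" U] by auto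
    moreover have "0 \<le> p ^ card U * (1-p) ^ (n - card U)" using p by simp
    ultimately show "p ^ card U * (1-p) ^ (n - card U) \<le> p ^ card U * (1-p) ^ (n - card U) * (l ^ card U * l powr (- (a * n)))"
      using mult_left_mono by fastforce
  qed
  also have "\<dots> \<le> (\<Sum>U\<in>Pow {..<n}. p ^ card U * (1-p) ^ (n - card U) * (l ^ card U * l powr (- (a * n))))"
    by (rule sum_mono2) (use GP p l in auto)
  also have "\<dots> = l powr (- (a * n)) * (\<Sum>U\<in>Pow {..<n}. (p * l) ^ card U * (1-p) ^ (n - card U))"
    by (simp add: sum_distrib_left power_mult_distrib algebra_simps)
  also have "\<dots> = l powr (- (a * n)) * (p * l + (1 - p)) ^ n" by (simp add: sum_pow_subsets2)
  also have "\<dots> = (l powr (-a) * (p*l + 1 - p))^n"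
  proof -
    have "l powr (- (a * n)) = (l powr (-a)) ^ n" using l
      by (simp add: powr_realpow[symmetric] powr_powr)
    thus ?thesis by (simp only: power_mult_distrib add_diff_eq)
  qed
  finally show ?thesis by (simp add: ennreal_leI)
qed

lemma exists_l_up:
  fixes p \<epsilon> :: real assumes eps: "\<epsilon> > 0"
  shows "\<exists>l>1. l powr (-(p+\<epsilon>)) * (p*l + 1 - p) < 1"
proof -
  define g where "g l = l powr (-(p+\<epsilon>)) * (p*l + 1 - p)" for l :: real
  have d: "(g has_real_derivative (-(p+\<epsilon>)) * 1 powr (-(p+\<epsilon>) - 1) * (p*1+1-p) + 1 powr (-(p+\<epsilon>)) * p) (at 1)"
    unfolding g_def by (auto intro!: derivative_eq_intros)
  hence d': "(g has_real_derivative -\<epsilon>) (at 1)" by (simp add: algebra_simps)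
  from DERIV_neg_dec_right[OF d'] eps obtain d where dd: "d > 0" "\<forall>h>0. h < d \<longrightarrow> g (1 + h) < g 1" by auto
  moreover have "g 1 = 1" by (simp add: g_def)
  ultimately have "g (1 + d/2) < 1" by auto
  thus ?thesis by (intro exI[of _ "1 + d/2"]) (use dd in \<open>simp add: g_def\<close>)
qed

lemma exists_l_down:
  fixes p \<epsilon> :: real assumes eps: "\<epsilon> > 0"
  shows "\<exists>l. 0 < l \<and> l < 1 \<and> l powr (-(p-\<epsilon>)) * (p*l + 1 - p) < 1"
proof -
  define g where "g l = l powr (-(p-\<epsilon>)) * (p*l + 1 - p)" for l :: real
  have d: "(g has_real_derivative (-(p-\<epsilon>)) * 1 powr (-(p-\<epsilon>) - 1) * (p*1+1-p) + 1 powr (-(p-\<epsilon>)) * p) (at 1)"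
    unfolding g_def by (auto intro!: derivative_eq_intros)
  hence d': "(g has_real_derivative \<epsilon>) (at 1)" by (simp add: algebra_simps)
  from DERIV_pos_inc_left[OF d'] eps obtain d where dd: "d > 0" "\<forall>h>0. h < d \<longrightarrow> g (1 - h) < g 1" by auto
  define h where "h = min (d/2) (1/2)"
  have h: "0 < h" "h < d" "h < 1" unfolding h_def using dd by auto
  moreover have "g 1 = 1" by (simp add: g_def)
  ultimately have "g (1 - h) < 1" using dd by auto
  thus ?thesis by (intro exI[of _ "1 - h"]) (use h in \<open>simp add: g_def\<close>)
qed

lemma pow_powr_ge1: "1 \<le> l \<Longrightarrow> c \<le> real k \<Longrightarrow> 1 \<le> l ^ k * l powr (- c)"
proof -
  assume l: "1 \<le> l" and c: "c \<le> real k"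
  have "l ^ k * l powr (- c) = l powr (real k - c)" using l by (simp add: powr_realpow[symmetric] powr_add[symmetric])
  moreover have "1 \<le> l powr (real k - c)" by (rule ge_one_powr_ge_zero) (use l c in auto)
  ultimately show ?thesis by simp
qed

lemma pow_powr_ge2: "0 < l \<Longrightarrow> l \<le> 1 \<Longrightarrow> real k \<le> c \<Longrightarrow> 1 \<le> l ^ k * l powr (- c)"
proof -
  assume l: "0 < l" "l \<le> 1" and c: "real k \<le> c"
  have "l ^ k * l powr (- c) = l powr (real k - c)" using l by (simp add: powr_realpow[symmetric] powr_add[symmetric])
  moreover have "l powr 0 \<le> l powr (real k - c)" by (rule powr_mono') (use l c in auto)
  ultimately show ?thesis using l by simp
qed

lemma freq_eventually:
  fixes p \<epsilon> :: real assumes p: "0 \<le> p" "p \<le> 1" and eps: "\<epsilon> > 0"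
  shows "AE \<omega> in nu p. eventually (\<lambda>n. \<bar>real (N n \<omega>) - p * n\<bar> < \<epsilon> * n) sequentially"
proof -
  interpret prob_space "nu p" by (rule nu_prob)
  obtain l1 where l1: "l1 > 1" "l1 powr (-(p+\<epsilon>)) * (p*l1 + 1 - p) < 1" using exists_l_up[OF eps] by blast
  obtain l2 where l2: "0 < l2" "l2 < 1" "l2 powr (-(p-\<epsilon>)) * (p*l2 + 1 - p) < 1" using exists_l_down[OF eps] by blast
  define r1 where "r1 = l1 powr (-(p+\<epsilon>)) * (p*l1 + 1 - p)"
  define r2 where "r2 = l2 powr (-(p-\<epsilon>)) * (p*l2 + 1 - p)"
  have "0 \<le> p*l1 + 1 - p" using p l1 by (simp add: algebra_simps) (smt (verit) mult_nonneg_nonneg)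
  hence r1: "0 \<le> r1" "r1 < 1" unfolding r1_def using l1 by auto
  have "0 \<le> p*l2 + 1 - p" using p l2 by (smt (verit) mult_nonneg_nonneg)
  hence r2: "0 \<le> r2" "r2 < 1" unfolding r2_def using l2 by auto
  define A where "A n = {\<omega> \<in> space (nu p). \<not> \<bar>real (N n \<omega>) - p * n\<bar> < \<epsilon> * n}" for n
  have Asets: "A n \<in> sets (nu p)" for n unfolding A_def by measurable
  have X1: "emeasure (nu p) {\<omega> \<in> space (nu p). (p+\<epsilon>) * n \<le> real (N n \<omega>)} \<le> ennreal (r1 ^ n)" for n
    unfolding r1_def
    by (rule event_bound[OF p, of l1 n "\<lambda>k. (p+\<epsilon>) * n \<le> real k" "p+\<epsilon>"])
       (use l1 in \<open>auto intro!: pow_powr_ge1\<close>)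
  have X2: "emeasure (nu p) {\<omega> \<in> space (nu p). real (N n \<omega>) \<le> (p-\<epsilon>) * n} \<le> ennreal (r2 ^ n)" for n
    unfolding r2_def
    by (rule event_bound[OF p, of l2 n "\<lambda>k. real k \<le> (p-\<epsilon>) * n" "p-\<epsilon>"])
       (use l2 in \<open>auto intro!: pow_powr_ge2\<close>)
  have mA: "measure (nu p) (A n) \<le> r1 ^ n + r2 ^ n" for n
  proof -
    have "A n \<subseteq> {\<omega> \<in> space (nu p). (p+\<epsilon>) * n \<le> real (N n \<omega>)} \<union> {\<omega> \<in> space (nu p). real (N n \<omega>) \<le> (p-\<epsilon>) * n}"
      unfolding A_def by (auto simp: algebra_simps)
    hence "emeasure (nu p) (A n) \<le> emeasure (nu p) ({\<omega> \<in> space (nu p). (p+\<epsilon>) * n \<le> real (N n \<omega>)} \<union> {\<omega> \<in> space (nu p). real (N n \<omega>) \<le> (p-\<epsilon>) * n})"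
      by (rule emeasure_mono) measurable
    also have "\<dots> \<le> emeasure (nu p) {\<omega> \<in> space (nu p). (p+\<epsilon>) * n \<le> real (N n \<omega>)} + emeasure (nu p) {\<omega> \<in> space (nu p). real (N n \<omega>) \<le> (p-\<epsilon>) * n}"
      by (rule emeasure_subadditive) measurable
    also have "\<dots> \<le> ennreal (r1 ^ n) + ennreal (r2 ^ n)" by (intro add_mono X1 X2)
    also have "\<dots> = ennreal (r1 ^ n + r2 ^ n)" by (rule ennreal_plus[symmetric]) (use r1 r2 in auto)
    finally have E: "emeasure (nu p) (A n) \<le> ennreal (r1 ^ n + r2 ^ n)" .
    have "emeasure (nu p) (A n) = ennreal (measure (nu p) (A n))" by (rule emeasure_eq_measure)
    with E have "ennreal (measure (nu p) (A n)) \<le> ennreal (r1 ^ n + r2 ^ n)" by simp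
    moreover have "0 \<le> r1 ^ n + r2 ^ n" using r1 r2 by simp
    ultimately show ?thesis using ennreal_le_iff by blast
  qed
  have sm: "summable (\<lambda>n. measure (nu p) (A n))"
  proof (rule summable_comparison_test'[of "\<lambda>n. r1 ^ n + r2 ^ n"])
    show "summable (\<lambda>n. r1 ^ n + r2 ^ n)" using r1 r2 by (intro summable_add summable_geometric) auto
    fix n show "norm (measure (nu p) (A n)) \<le> r1 ^ n + r2 ^ n" using mA[of n] by simp
  qed
  have "AE \<omega> in nu p. eventually (\<lambda>n. \<omega> \<in> space (nu p) - A n) sequentially"
    by (rule borel_cantelli_AE1[OF Asets _ sm]) (simp add: emeasure_eq_measure)
  thus ?thesis
    by (rule AE_mp) (auto simp: A_def elim: eventually_mono intro!: AE_I2)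
qed

lemma freq_tendsto:
  fixes p :: real
  assumes H: "\<And>k::nat. eventually (\<lambda>n. \<bar>real (N n \<omega>) - p * n\<bar> < (1 / Suc k) * n) sequentially"
  shows "(\<lambda>n. real (N n \<omega>) / real n) \<longlonglongrightarrow> p"
proof (rule tendstoI)
  fix e :: real assume e: "e > 0"
  obtain k where k: "inverse (real (Suc k)) < e" using reals_Archimedean[OF e] by blast
  have "eventually (\<lambda>n. \<bar>real (N n \<omega>) - p * n\<bar> < (1 / Suc k) * n \<and> n \<ge> 1) sequentially"
    using H[of k] eventually_ge_at_top[of 1] by eventually_elim auto
  thus "eventually (\<lambda>n. dist (real (N n \<omega>) / real n) p < e) sequentially"
  proof eventually_elim
    case (elim n)
    hence np: "real n > 0" by simp
    have "dist (real (N n \<omega>) / real n) p = \<bar>real (N n \<omega>) - p * n\<bar> / real n"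
      using np by (simp add: dist_real_def field_simps abs_divide)
    also have "\<dots> < (1 / Suc k) * n / real n" using elim np by (intro divide_strict_right_mono) auto
    also have "\<dots> = 1 / real (Suc k)" by (rule nonzero_mult_div_cancel_right) (use np in simp)
    also have "\<dots> = inverse (real (Suc k))" by (simp add: inverse_eq_divide)
    finally show ?case using k by simp
  qed
qed

lemma slln:
  fixes p :: real assumes p: "0 \<le> p" "p \<le> 1"
  shows "AE \<omega> in nu p. (\<lambda>n. real (N n \<omega>) / real n) \<longlonglongrightarrow> p"
proof -
  have "\<forall>k::nat. AE \<omega> in nu p. eventually (\<lambda>n. \<bar>real (N n \<omega>) - p * n\<bar> < (1 / Suc k) * n) sequentially"
  proof
    fix k :: nat show "AE \<omega> in nu p. eventually (\<lambda>n. \<bar>real (N n \<omega>) - p * n\<bar> < (1 / Suc k) * n) sequentially"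
      by (rule freq_eventually[OF p]) simp
  qed
  hence "AE \<omega> in nu p. \<forall>k::nat. eventually (\<lambda>n. \<bar>real (N n \<omega>) - p * n\<bar> < (1 / Suc k) * n) sequentially"
    by (simp add: AE_all_countable)
  thus ?thesis by (rule AE_mp) (auto intro!: AE_I2 freq_tendsto)
qed

lemma freq_io:
  fixes p :: real
  assumes p: "p > 0" and lim: "(\<lambda>m. real (N m \<omega>) / real m) \<longlonglongrightarrow> p"
  shows "io \<omega>"
proof (rule ccontr)
  assume "\<not> io \<omega>"
  then obtain n where n: "\<And>i. i \<ge> n \<Longrightarrow> \<not> \<omega> i" unfolding io_def by auto
  have Nc: "N m \<omega> \<le> n" for m
  proof (cases "m \<le> n")
    case True thus ?thesis using N_le[of m \<omega>] by simp
  next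
    case False
    then obtain l where l: "m = n + l" by (metis le_add_diff_inverse nat_le_linear)
    have "{i. i < l \<and> \<omega> (i + n)} = {}" using n by auto
    hence "N l (\<lambda>i. \<omega> (i + n)) = 0" unfolding N_def by simp
    thus ?thesis using l N_add[of n l \<omega>] N_le[of n \<omega>] by simp
  qed
  have z: "(\<lambda>m. real n * (1 / real m)) \<longlonglongrightarrow> real n * 0"
    by (intro tendsto_mult tendsto_const lim_inverse_n')
  have "(\<lambda>m. real (N m \<omega>) / real m) \<longlonglongrightarrow> 0"
  proof (rule tendsto_sandwich[of "\<lambda>_. 0" _ _ "\<lambda>m. real n * (1 / real m)"])
    show "eventually (\<lambda>m. 0 \<le> real (N m \<omega>) / real m) sequentially" by simp
    show "eventually (\<lambda>m. real (N m \<omega>) / real m \<le> real n * (1 / real m)) sequentially"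
      using Nc by (auto intro!: always_eventually divide_right_mono)
  qed (use z in simp_all)
  with lim have "p = 0" using LIMSEQ_unique by blast
  with p show False by simp
qed

definition Hent :: "real \<Rightarrow> real" where "Hent p = - p * ln p - (1 - p) * ln (1 - p)"

lemma frost_eventually:
  fixes p s0 :: real
  assumes p: "0 < p" "p < 1" and s0: "s0 * ln 2 < Hent p"
    and lim: "(\<lambda>m. real (N m \<omega>) / real m) \<longlonglongrightarrow> p"
  shows "eventually (\<lambda>m. wt p m \<omega> \<le> exp (- (m * s0 * ln 2))) sequentially"
proof -
  define f where "f y = y * ln p + (1 - y) * ln (1 - p)" for y
  have "(\<lambda>m. f (real (N m \<omega>) / real m)) \<longlonglongrightarrow> f p" unfolding f_def by (intro tendsto_intros lim)
  moreover have "f p < - (s0 * ln 2)" using s0 unfolding f_def Hent_def by simp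
  ultimately have ev: "eventually (\<lambda>m. f (real (N m \<omega>) / real m) < - (s0 * ln 2)) sequentially"
    by (rule order_tendstoD)
  show ?thesis using ev eventually_ge_at_top[of 1]
  proof eventually_elim
    case (elim m)
    have mp: "real m > 0" using elim by simp
    have le: "N m \<omega> \<le> m" by (rule N_le)
    have wt: "wt p m \<omega> = exp (real (N m \<omega>) * ln p + real (m - N m \<omega>) * ln (1 - p))"
      using p by (simp add: wt_eq exp_add exp_of_nat_mult)
    have "real (N m \<omega>) * ln p + real (m - N m \<omega>) * ln (1 - p) = real m * f (real (N m \<omega>) / real m)"
      using mp le unfolding f_def by (simp add: of_nat_diff field_simps)
    also have "\<dots> \<le> real m * (- (s0 * ln 2))" using elim mp by (intro mult_left_mono) auto
    finally show ?case unfolding wt by simp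
  qed
qed

definition Gs :: "real \<Rightarrow> real \<Rightarrow> nat \<Rightarrow> (nat \<Rightarrow> bool) set" where
  "Gs p s0 M = {\<omega> \<in> space (nu p). \<forall>m\<in>{M..}. wt p m \<omega> \<le> exp (- (m * s0 * ln 2))}"

lemma wt_meas [measurable]: "(\<lambda>\<omega>. wt p m \<omega>) \<in> borel_measurable (nu p)"
  unfolding wt_def by measurable

lemma Gs_meas: "Gs p s0 M \<in> sets (nu p)"
  unfolding Gs_def by measurable

lemma Gs_pos:
  fixes p s0 :: real
  assumes p: "0 < p" "p < 1" and s0: "s0 * ln 2 < Hent p"
  shows "\<exists>M. measure (nu p) (Gs p s0 M) > 0"
proof (rule ccontr)
  interpret prob_space "nu p" by (rule nu_prob)
  assume "\<not> ?thesis"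
  hence "\<And>M. measure (nu p) (Gs p s0 M) = 0" using measure_nonneg by (metis not_less order.antisym)
  hence z: "\<And>M. Gs p s0 M \<in> null_sets (nu p)"
    using Gs_meas by (simp add: null_sets_def emeasure_eq_measure)
  have a1: "AE \<omega> in nu p. \<omega> \<notin> (\<Union>M. Gs p s0 M)" by (rule AE_not_in[OF null_sets_UN[OF z]])
  have a2: "AE \<omega> in nu p. \<omega> \<in> (\<Union>M. Gs p s0 M)"
  proof -
    have "AE \<omega> in nu p. (\<lambda>n. real (N n \<omega>) / real n) \<longlonglongrightarrow> p" using slln[of p] p by simp
    thus ?thesis
    proof (rule AE_mp[OF _ AE_I2], intro impI)
      fix \<omega> assume lim: "(\<lambda>n. real (N n \<omega>) / real n) \<longlonglongrightarrow> p"
      obtain M where "\<forall>m\<ge>M. wt p m \<omega> \<le> exp (- (m * s0 * ln 2))"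
        using frost_eventually[OF p s0 lim] unfolding eventually_sequentially by blast
      hence "\<omega> \<in> Gs p s0 M" unfolding Gs_def by (simp add: space_nu)
      thus "\<omega> \<in> (\<Union>M. Gs p s0 M)" by blast
    qed
  qed
  have "AE \<omega> in nu p. False" using a1 a2 by eventually_elim simp
  thus False by simp
qed

lemma choose_level:
  fixes d :: real assumes d: "0 < d" "d \<le> (1/2)^M"
  shows "\<exists>m\<ge>M. d \<le> (1/2)^m \<and> (1/2)^(Suc m) < d"
proof -
  have ex: "\<exists>n. (1/2::real)^n < d" using real_arch_pow_inv[of d "1/2"] d by auto
  define n where "n = (LEAST n. (1/2::real)^n < d)"
  have n1: "(1/2::real)^n < d" unfolding n_def by (rule LeastI_ex[OF ex])
  have n2: "\<And>j. j < n \<Longrightarrow> \<not> (1/2::real)^j < d" unfolding n_def by (rule not_less_Least)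
  have nM: "M < n"
  proof (rule ccontr)
    assume "\<not> M < n"
    hence "(1/2::real)^M \<le> (1/2)^n" by (intro power_decreasing) auto
    with n1 d show False by simp
  qed
  define m where "m = n - 1"
  have mn: "Suc m = n" using nM unfolding m_def by simp
  have "d \<le> (1/2)^m" using n2[of m] mn by simp
  moreover have "M \<le> m" using nM mn by simp
  ultimately show ?thesis using n1 mn by blast
qed

lemma cyl_kk: "{\<omega> \<in> space (nu p). kk m \<omega> = kk m \<omega>'} = {\<omega> \<in> space (nu p). \<forall>j\<in>{..<m}. \<omega> j = \<omega>' j}"
proof (intro Collect_cong conj_cong refl)
  fix \<omega> show "(kk m \<omega> = kk m \<omega>') = (\<forall>j\<in>{..<m}. \<omega> j = \<omega>' j)"
  proof
    assume "kk m \<omega> = kk m \<omega>'" thus "\<forall>j\<in>{..<m}. \<omega> j = \<omega>' j" using kk_inj by blast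
  next
    assume "\<forall>j\<in>{..<m}. \<omega> j = \<omega>' j" thus "kk m \<omega> = kk m \<omega>'" by (intro kk_cong) simp
  qed
qed

lemma level_bound:
  fixes s s0 d r :: real and m :: nat
  assumes s: "0 \<le> s" "s \<le> s0" and d: "(1/2)^(Suc m) < d"
  shows "exp (- (m * s0 * ln 2)) \<le> 2 powr s * d powr s"
proof -
  have "exp (- (m * s0 * ln 2)) \<le> exp (- (m * s * ln 2))"
    using s by (simp add: mult_left_mono mult_right_mono)
  also have "\<dots> = 2 powr s * exp (- (Suc m * s * ln 2))"
    by (simp add: powr_def exp_add[symmetric] algebra_simps)
  also have "exp (- (Suc m * s * ln 2)) = ((1/2)^(Suc m)) powr s"
    using powr_half[of "Suc m" s] by (simp only: power_one_over)
  also have "\<dots> \<le> d powr s" by (rule powr_mono2) (use s d in auto)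
  finally show ?thesis by simp
qed

lemma Kcard3:
  fixes K :: "nat set"
  assumes fin: "finite K" and cl: "\<And>k k'. k \<in> K \<Longrightarrow> k' \<in> K \<Longrightarrow> k \<le> k' + 2"
  shows "card K \<le> 3"
proof (cases "K = {}")
  case True then show ?thesis by simp
next
  case False
  define a where "a = Min K"
  have "K \<subseteq> {a..a+2}"
  proof
    fix k assume k: "k \<in> K"
    have "a \<le> k" unfolding a_def using fin k by simp
    moreover have "k \<le> a + 2" using cl[OF k] fin False unfolding a_def by simp
    ultimately show "k \<in> {a..a+2}" by simp
  qed
  hence "card K \<le> card {a..a+2}" by (rule card_mono[rotated]) simp
  thus ?thesis by simp
qed

lemma lower_bound:
  fixes p s :: real
  assumes p: "0 < p" "p < 1" and s: "0 \<le> s" "s * ln 2 < Hent p"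
  shows "hausdorff_measure s (Elevel (1/p)) \<noteq> 0"
proof -
  interpret prob_space "nu p" by (rule nu_prob)
  define h where "h = Hent p / ln 2"
  define s0 where "s0 = (s + h) / 2"
  have sH: "s < h" unfolding h_def using s(2) by (simp add: less_divide_eq)
  have s01: "s \<le> s0" unfolding s0_def using sH by (simp add: field_simps)
  have s02: "s0 < h" unfolding s0_def using sH by (simp add: field_simps)
  hence s03: "s0 * ln 2 < Hent p" unfolding h_def by (simp add: less_divide_eq)
  have s04: "0 < s0" unfolding s0_def using sH s(1) by (simp add: field_simps)
  note s0 = s01 s03 s04
  obtain M where M: "measure (nu p) (Gs p s0 M) > 0" using Gs_pos[OF p s0(2)] by blast
  define c0 where "c0 = measure (nu p) (Gs p s0 M)"
  have c0: "c0 > 0" using M unfolding c0_def .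
  define r where "r = exp (- (s0 * ln 2))"
  have r: "0 < r" "r < 1" unfolding r_def using s0 by auto
  have rpow: "exp (- (real m * s0 * ln 2)) = r ^ m" for m
    unfolding r_def by (simp add: exp_of_nat_mult[symmetric] algebra_simps)
  have "(\<lambda>K. 3 * r^M / (1 - r) * r ^ K) \<longlonglongrightarrow> 3 * r^M / (1 - r) * 0"
    by (intro tendsto_mult tendsto_const LIMSEQ_power_zero) (use r in simp)
  hence "eventually (\<lambda>K. 3 * r^M / (1 - r) * r ^ K < c0 / 2) sequentially"
    using c0 by (intro order_tendstoD(2)) auto
  then obtain K where K: "3 * r^M / (1 - r) * r ^ K < c0 / 2"
    unfolding eventually_sequentially by blast
  define \<delta> where "\<delta> = (1/2::real)^M"
  define c where "c = c0 / (6 * 2 powr s)"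
  show ?thesis
  proof (rule pos_imp[of \<delta> c])
    show "\<delta> > 0" unfolding \<delta>_def by simp
    show "c > 0" unfolding c_def using c0 by simp
    fix C assume cov: "covers (Elevel (1/p)) \<delta> C"
    define d where "d i = diameter (C i)" for i
    have dle: "d i \<le> \<delta>" "0 \<le> d i" "bounded (C i)" for i
      using cov unfolding covers_def d_def by (auto simp: diameter_ge_0)
    have "\<forall>i. \<exists>m. M \<le> m \<and> d i \<le> (1/2)^m \<and> exp (- (m * s0 * ln 2)) \<le> 2 powr s * d i powr s + r^(M+K+i)"
    proof
      fix i show "\<exists>m. M \<le> m \<and> d i \<le> (1/2)^m \<and> exp (- (m * s0 * ln 2)) \<le> 2 powr s * d i powr s + r^(M+K+i)"
      proof (cases "d i = 0")
        case True
        show ?thesis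
          by (rule exI[of _ "M+K+i"]) (use True in \<open>simp add: rpow del: of_nat_add\<close>)
      next
        case False
        hence dp: "0 < d i" using dle(2)[of i] by simp
        obtain m where m: "M \<le> m" "d i \<le> (1/2)^m" "(1/2)^(Suc m) < d i"
          using choose_level[OF dp dle(1)[of i, unfolded \<delta>_def]] by blast
        have "exp (- (m * s0 * ln 2)) \<le> 2 powr s * d i powr s"
          by (rule level_bound[OF s(1) s0(1) m(3)])
        also have "\<dots> \<le> 2 powr s * d i powr s + r^(M+K+i)" using r by simp
        finally show ?thesis using m by blast
      qed
    qed
    then obtain mf where mf: "\<And>i. M \<le> mf i \<and> d i \<le> (1/2)^(mf i) \<and> exp (- (mf i * s0 * ln 2)) \<le> 2 powr s * d i powr s + r^(M+K+i)"
      by metis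
    define Ks where "Ks i = {kk (mf i) \<omega>' | \<omega>'. \<omega>' \<in> Gs p s0 M \<and> val \<omega>' \<in> C i}" for i
    define U where "U i = {\<omega> \<in> space (nu p). kk (mf i) \<omega> \<in> Ks i}" for i
    have Kfin: "finite (Ks i)" for i
      by (rule finite_subset[of _ "{..<2^(mf i)}"]) (auto simp: Ks_def kk_lt)
    have Kclose: "k \<le> k' + 2" if k: "k \<in> Ks i" "k' \<in> Ks i" for i k k'
    proof -
      obtain w1 where w1: "k = kk (mf i) w1" "val w1 \<in> C i" using k(1) unfolding Ks_def by blast
      obtain w2 where w2: "k' = kk (mf i) w2" "val w2 \<in> C i" using k(2) unfolding Ks_def by blast
      have "dist (val w1) (val w2) \<le> d i" unfolding d_def by (rule diameter_bounded_bound[OF dle(3) w1(2) w2(2)])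
      hence da: "\<bar>val w1 - val w2\<bar> \<le> d i" by (simp add: dist_real_def)
      have "d i \<le> (1/2)^(mf i)" using mf[of i] by blast
      hence dd: "val w1 \<le> val w2 + (1/2)^(mf i)" using da abs_ge_self[of "val w1 - val w2"] by linarith
      have "real k / 2^(mf i) \<le> val w1" using val_bounds(1)[of "mf i" w1] w1 by simp
      moreover have "val w2 \<le> (real k' + 1) / 2^(mf i)" using val_bounds(2)[of w2 "mf i"] w2 by simp
      ultimately have "real k / 2^(mf i) \<le> (real k' + 1) / 2^(mf i) + 1 / 2^(mf i)"
        using dd by (simp add: power_one_over)
      hence "real k / 2^(mf i) \<le> (real k' + 2) / 2^(mf i)" by (simp add: add_divide_distrib)
      hence "real k \<le> real k' + 2" by (simp add: divide_le_cancel)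
      thus ?thesis by linarith
    qed
    have Kcard: "card (Ks i) \<le> 3" for i by (rule Kcard3[OF Kfin Kclose])
    have Ueq: "U i = (\<Union>k\<in>Ks i. {\<omega> \<in> space (nu p). kk (mf i) \<omega> = k})" for i
      unfolding U_def by auto
    have piece: "{\<omega> \<in> space (nu p). kk (mf i) \<omega> = k} \<in> sets (nu p) \<and>
                 emeasure (nu p) {\<omega> \<in> space (nu p). kk (mf i) \<omega> = k} \<le> ennreal (exp (- (mf i * s0 * ln 2)))"
      if k: "k \<in> Ks i" for i k
    proof -
      obtain w where w: "k = kk (mf i) w" "w \<in> Gs p s0 M" using k unfolding Ks_def by blast
      have e: "{\<omega> \<in> space (nu p). kk (mf i) \<omega> = k} = {\<omega> \<in> space (nu p). \<forall>j\<in>{..<mf i}. \<omega> j = w j}"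
        unfolding w(1) by (rule cyl_kk)
      have "wt p (mf i) w \<le> exp (- (mf i * s0 * ln 2))" using w(2) mf[of i] unfolding Gs_def by auto
      thus ?thesis unfolding e using p by (simp add: cyl_meas cyl_emeasure ennreal_leI)
    qed
    have Umeas: "U i \<in> sets (nu p)" for i
      unfolding Ueq using Kfin piece by (intro sets.finite_UN) auto
    have Ubound: "emeasure (nu p) (U i) \<le> ennreal (3 * exp (- (mf i * s0 * ln 2)))" for i
    proof -
      have "emeasure (nu p) (U i) \<le> (\<Sum>k\<in>Ks i. emeasure (nu p) {\<omega> \<in> space (nu p). kk (mf i) \<omega> = k})"
        unfolding Ueq by (rule emeasure_subadditive_finite[OF Kfin]) (use piece in auto)
      also have "\<dots> \<le> (\<Sum>k\<in>Ks i. ennreal (exp (- (mf i * s0 * ln 2))))"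
        by (rule sum_mono) (use piece in auto)
      also have "\<dots> = of_nat (card (Ks i)) * ennreal (exp (- (mf i * s0 * ln 2)))" by simp
      also have "\<dots> \<le> of_nat 3 * ennreal (exp (- (mf i * s0 * ln 2)))"
        by (intro mult_right_mono) (use Kcard in auto)
      also have "\<dots> = ennreal (3 * exp (- (mf i * s0 * ln 2)))" by (simp add: ennreal_mult)
      finally show ?thesis .
    qed
    have cover: "AE \<omega> in nu p. \<omega> \<in> Gs p s0 M \<longrightarrow> \<omega> \<in> (\<Union>i. U i)"
    proof -
      have "AE \<omega> in nu p. (\<lambda>n. real (N n \<omega>) / real n) \<longlonglongrightarrow> p" using slln[of p] p by simp
      thus ?thesis
      proof (rule AE_mp[OF _ AE_I2], intro impI)
        fix \<omega> assume lim: "(\<lambda>n. real (N n \<omega>) / real n) \<longlonglongrightarrow> p" and G: "\<omega> \<in> Gs p s0 M"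
        have io: "io \<omega>" by (rule freq_io[OF p(1) lim])
        have "val \<omega> \<in> Elevel (1/p)" by (rule freq_Elevel[OF io p(1) lim])
        then obtain i where "val \<omega> \<in> C i" using cov unfolding covers_def by blast
        hence "kk (mf i) \<omega> \<in> Ks i" unfolding Ks_def using G by blast
        hence "\<omega> \<in> U i" unfolding U_def by (simp add: space_nu)
        thus "\<omega> \<in> (\<Union>i. U i)" by blast
      qed
    qed
    have UUmeas: "(\<Union>i. U i) \<in> sets (nu p)" by (rule sets.countable_nat_UN) (use Umeas in auto)
    have "ennreal c0 = emeasure (nu p) (Gs p s0 M)" unfolding c0_def by (simp add: emeasure_eq_measure)
    also have "\<dots> \<le> emeasure (nu p) (\<Union>i. U i)"
      by (rule emeasure_mono_AE[OF cover UUmeas])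
    also have "\<dots> \<le> (\<Sum>i. emeasure (nu p) (U i))"
      by (rule emeasure_subadditive_countably) (use Umeas in auto)
    also have "\<dots> \<le> (\<Sum>i. ennreal (3 * 2 powr s) * ennreal (d i powr s) + ennreal (3 * r^(M+K+i)))"
    proof (rule suminf_le)
      fix i
      have "emeasure (nu p) (U i) \<le> ennreal (3 * exp (- (mf i * s0 * ln 2)))" by (rule Ubound)
      also have "\<dots> \<le> ennreal (3 * (2 powr s * d i powr s + r^(M+K+i)))"
        using mf[of i] by (intro ennreal_leI) simp
      also have "3 * (2 powr s * d i powr s + r^(M+K+i)) = 3 * 2 powr s * d i powr s + 3 * r^(M+K+i)"
        by (simp add: algebra_simps)
      also have "ennreal (3 * 2 powr s * d i powr s + 3 * r^(M+K+i)) = ennreal (3 * 2 powr s * d i powr s) + ennreal (3 * r^(M+K+i))"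
        by (rule ennreal_plus) (use r in auto)
      also have "ennreal (3 * 2 powr s * d i powr s) = ennreal (3 * 2 powr s) * ennreal (d i powr s)"
        by (rule ennreal_mult) auto
      finally show "emeasure (nu p) (U i) \<le> ennreal (3 * 2 powr s) * ennreal (d i powr s) + ennreal (3 * r^(M+K+i))" .
    qed (rule summableI)+
    also have "\<dots> = (\<Sum>i. ennreal (3 * 2 powr s) * ennreal (d i powr s)) + (\<Sum>i. ennreal (3 * r^(M+K+i)))"
      by (rule suminf_add[symmetric]) (rule summableI)+
    also have "(\<Sum>i. ennreal (3 * 2 powr s) * ennreal (d i powr s)) = ennreal (3 * 2 powr s) * csum s C"
      unfolding csum_def d_def by (rule ennreal_suminf_cmult)
    also have "(\<Sum>i. ennreal (3 * r^(M+K+i))) = ennreal (3 * r^M / (1-r) * r^K)"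
    proof -
      have sm: "summable (\<lambda>i. 3 * r^(M+K) * r^i)"
        by (rule summable_mult[OF summable_geometric]) (use r in simp)
      have "(\<Sum>i. 3 * r^(M+K) * r^i) = 3 * r^(M+K) * (\<Sum>i. r^i)"
        by (rule suminf_mult[OF summable_geometric]) (use r in simp)
      also have "\<dots> = 3 * r^M / (1-r) * r^K" using r by (simp add: suminf_geometric power_add field_simps)
      finally have e: "(\<Sum>i. 3 * r^(M+K) * r^i) = 3 * r^M / (1-r) * r^K" .
      have "(\<Sum>i. ennreal (3 * r^(M+K+i))) = (\<Sum>i. ennreal (3 * r^(M+K) * r^i))"
        by (simp add: power_add mult.assoc)
      also have "\<dots> = ennreal (\<Sum>i. 3 * r^(M+K) * r^i)" by (rule suminf_ennreal2[OF _ sm]) (use r in simp)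
      finally show ?thesis using e by simp
    qed
    finally have main: "ennreal c0 \<le> ennreal (3 * 2 powr s) * csum s C + ennreal (3 * r^M / (1-r) * r^K)" .
    show "ennreal c \<le> csum s C"
    proof (cases "csum s C = \<top>")
      case True thus ?thesis by simp
    next
      case False
      from False obtain x where x: "csum s C = ennreal x" "0 \<le> x" by (cases "csum s C" rule: ennreal_cases) auto
      have B0: "0 \<le> 3 * r^M / (1-r) * r^K" using r by simp
      have "ennreal (3 * 2 powr s) * csum s C + ennreal (3 * r^M / (1-r) * r^K)
            = ennreal (3 * 2 powr s * x + 3 * r^M / (1-r) * r^K)"
      proof -
        have "ennreal (3 * 2 powr s) * ennreal x = ennreal (3 * 2 powr s * x)" by (rule ennreal_mult[symmetric]) (use x in auto)
        moreover have "ennreal (3 * 2 powr s * x) + ennreal (3 * r^M / (1-r) * r^K) = ennreal (3 * 2 powr s * x + 3 * r^M / (1-r) * r^K)"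
          by (rule ennreal_plus[symmetric]) (use x B0 in auto)
        ultimately show ?thesis using x by simp
      qed
      with main have E: "ennreal c0 \<le> ennreal (3 * 2 powr s * x + 3 * r^M / (1-r) * r^K)" by simp
      have A0: "0 \<le> 3 * 2 powr s * x + 3 * r^M / (1-r) * r^K" using x B0 by simp
      have "c0 \<le> 3 * 2 powr s * x + 3 * r^M / (1-r) * r^K" using ennreal_le_iff[OF A0] E by blast
      with K have "c0 / 2 < 3 * 2 powr s * x" by linarith
      hence "c0 < 6 * 2 powr s * x" by linarith
      hence "c \<le> x" unfolding c_def by (simp add: divide_le_eq mult.commute)
      thus ?thesis using x by (simp add: ennreal_leI)
    qed
  qed
qed

definition tf :: "real \<Rightarrow> real" where
  "tf \<xi> = (ln (\<xi> - 1) / \<xi> + ln \<xi> - ln (\<xi> - 1)) / ln 2"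

lemma Hent_tf: assumes xi: "\<xi> > 1" shows "Hent (1/\<xi>) = tf \<xi> * ln 2"
proof -
  have a: "ln (1/\<xi>) = - ln \<xi>" using xi by (simp add: ln_div)
  have b: "1 - 1/\<xi> = (\<xi> - 1) / \<xi>" using xi by (simp add: field_simps)
  have c: "ln ((\<xi> - 1) / \<xi>) = ln (\<xi> - 1) - ln \<xi>" using xi by (simp add: ln_div)
  have "Hent (1/\<xi>) = ln \<xi> / \<xi> - ((\<xi> - 1) / \<xi>) * (ln (\<xi> - 1) - ln \<xi>)"
    unfolding Hent_def a b c by simp
  also have "\<dots> = ln (\<xi> - 1) / \<xi> + ln \<xi> - ln (\<xi> - 1)" using xi by (simp add: field_simps)
  also have "\<dots> = tf \<xi> * ln 2" unfolding tf_def by simp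
  finally show ?thesis .
qed

lemma Hent_nonneg: "0 < p \<Longrightarrow> p < 1 \<Longrightarrow> 0 \<le> Hent p"
proof -
  assume p: "0 < p" "p < 1"
  have "ln p < 0" "ln (1 - p) < 0" using p by auto
  hence a: "p * ln p \<le> 0" "(1 - p) * ln (1 - p) \<le> 0" using p
    by (simp_all add: mult_nonneg_nonpos less_imp_le)
  have "Hent p = - (p * ln p) - ((1 - p) * ln (1 - p))" unfolding Hent_def by simp
  thus ?thesis using a by linarith
qed

lemma Inf_char:
  fixes S :: "real set" and t :: real
  assumes up: "\<And>s. s > t \<Longrightarrow> s \<in> S" and lo: "\<And>s. s \<in> S \<Longrightarrow> t \<le> s"
  shows "Inf S = t"
proof -
  have ne: "S \<noteq> {}" using up[of "t + 1"] by auto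
  have bdd: "bdd_below S" using lo by (auto simp: bdd_below_def)
  have "t \<le> Inf S" by (rule cInf_greatest[OF ne]) (rule lo)
  moreover have "Inf S \<le> t"
  proof (rule field_le_epsilon)
    fix e :: real assume "0 < e"
    hence "t + e \<in> S" by (intro up) simp
    thus "Inf S \<le> t + e" by (rule cInf_lower[OF _ bdd])
  qed
  ultimately show ?thesis by simp
qed

lemma dim_formula: assumes xi: "\<xi> > 1" shows "tdim \<xi> = tf \<xi>"
proof -
  define p where "p = 1 / \<xi>"
  have p: "0 < p" "p < 1" unfolding p_def using xi by auto
  have xp: "\<xi> = 1 / p" unfolding p_def using xi by simp
  have H: "Hent p = tf \<xi> * ln 2" unfolding p_def by (rule Hent_tf[OF xi])
  have t0: "0 \<le> tf \<xi>" using Hent_nonneg[OF p] H by (simp add: zero_le_mult_iff)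
  show ?thesis unfolding tdim_def hausdorff_dim_def
  proof (rule Inf_char)
    fix s assume s: "s > tf \<xi>"
    have "Zs s (Elevel \<xi>)"
    proof (rule Zs_Elevel[of \<xi> p])
      show "\<xi> > 0" using xi by simp
      show "0 < p" "p < 1" using p by auto
      have "- (1/\<xi>) * ln p - (1 - 1/\<xi>) * ln (1 - p) = Hent p" unfolding Hent_def p_def by simp
      also have "\<dots> < s * ln 2" unfolding H using s by simp
      finally show "- (1/\<xi>) * ln p - (1 - 1/\<xi>) * ln (1 - p) < s * ln 2" .
    qed
    hence "hausdorff_measure s (Elevel \<xi>) = 0" by (rule Zs_imp)
    thus "s \<in> {s. 0 \<le> s \<and> hausdorff_measure s (Elevel \<xi>) = 0}" using s t0 by simp
  next
    fix s assume s: "s \<in> {s. 0 \<le> s \<and> hausdorff_measure s (Elevel \<xi>) = 0}"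
    show "tf \<xi> \<le> s"
    proof (rule ccontr)
      assume "\<not> tf \<xi> \<le> s"
      hence "s * ln 2 < Hent p" unfolding H by simp
      hence "hausdorff_measure s (Elevel (1/p)) \<noteq> 0" using lower_bound[OF p] s by simp
      thus False using s xp by simp
    qed
  qed
qed

lemma dim_one: "hausdorff_dim (Elevel 1) = 0"
  unfolding hausdorff_dim_def
proof (rule Inf_char)
  fix s :: real assume s: "s > 0"
  define q where "q = exp (- (s * ln 2) / 2)"
  have q: "0 < q" "q < 1" unfolding q_def using s by auto
  have "Zs s (Elevel 1)"
  proof (rule Zs_Elevel[OF _ q])
    have "- (1/1) * ln q - (1 - 1/1) * ln (1 - q) = s * ln 2 / 2" unfolding q_def by simp
    also have "\<dots> < s * ln 2" using s by simp
    finally show "- (1/1) * ln q - (1 - 1/1) * ln (1 - q) < s * ln 2" .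
  qed simp
  hence "hausdorff_measure s (Elevel 1) = 0" by (rule Zs_imp)
  thus "s \<in> {s. 0 \<le> s \<and> hausdorff_measure s (Elevel 1) = 0}" using s by simp
qed simp

definition tf' :: "real \<Rightarrow> real" where "tf' \<xi> = - ln (\<xi> - 1) / (\<xi>^2 * ln 2)"
definition tf'' :: "real \<Rightarrow> real" where "tf'' \<xi> = (2 * ln (\<xi> - 1) - \<xi> / (\<xi> - 1)) / (\<xi>^3 * ln 2)"

lemma tf_lim1: "(tf \<longlongrightarrow> 0) (at_right 1)"
  unfolding tf_def by real_asymp

lemma tf_lim_top: "(tf \<longlongrightarrow> 0) at_top"
  unfolding tf_def by real_asymp

lemma tf'_lim1: "filterlim tf' at_top (at_right 1)"
  unfolding tf'_def by real_asymp

lemma tf'_lim_top: "(tf' \<longlongrightarrow> 0) at_top"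
  unfolding tf'_def by real_asymp

lemma tf_deriv: assumes "\<xi> > 1" shows "(tf has_real_derivative tf' \<xi>) (at \<xi>)"
proof -
  have "(tf has_real_derivative ((1 / (\<xi> - 1) * \<xi> - ln (\<xi> - 1) * 1) / \<xi>^2 + 1 / \<xi> - 1 / (\<xi> - 1)) / ln 2) (at \<xi>)"
    unfolding tf_def using assms by (auto intro!: derivative_eq_intros simp: power2_eq_square)
  moreover have "((1 / (\<xi> - 1) * \<xi> - ln (\<xi> - 1) * 1) / \<xi>^2 + 1 / \<xi> - 1 / (\<xi> - 1)) / ln 2 = tf' \<xi>"
  proof -
    have z: "1 / (\<xi> - 1) * \<xi> / \<xi>^2 + 1 / \<xi> - 1 / (\<xi> - 1) = 0"
      using assms by (simp add: field_simps power2_eq_square)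
    have "(1 / (\<xi> - 1) * \<xi> - ln (\<xi> - 1) * 1) / \<xi>^2 + 1 / \<xi> - 1 / (\<xi> - 1)
        = (1 / (\<xi> - 1) * \<xi> / \<xi>^2 + 1 / \<xi> - 1 / (\<xi> - 1)) - ln (\<xi> - 1) / \<xi>^2"
      by (simp add: diff_divide_distrib)
    also have "\<dots> = - ln (\<xi> - 1) / \<xi>^2" using z by simp
    finally show ?thesis unfolding tf'_def by simp
  qed
  ultimately show ?thesis by simp
qed

lemma tf'_deriv: assumes xi: "\<xi> > 1" shows "(tf' has_real_derivative tf'' \<xi>) (at \<xi>)"
proof -
  define L where "L = ln (\<xi> - 1)"
  define a where "a = \<xi> / (\<xi> - 1)"
  have D: "(tf' has_real_derivative (- ((\<xi> * \<xi> * ln 2 / (\<xi> - 1) - ln (\<xi> - 1) * (2 * \<xi> * ln 2)) / (\<xi> * \<xi> * ln 2 * (\<xi> * \<xi> * ln 2))))) (at \<xi>)"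
    unfolding tf'_def using xi by (auto intro!: derivative_eq_intros simp: power2_eq_square)
  have e1: "\<xi> * \<xi> * ln 2 / (\<xi> - 1) - ln (\<xi> - 1) * (2 * \<xi> * ln 2) = (\<xi> * ln 2) * (a - 2 * L)"
    unfolding a_def L_def by (simp add: algebra_simps)
  have e2: "\<xi> * \<xi> * ln 2 * (\<xi> * \<xi> * ln 2) = (\<xi> * ln 2) * (\<xi>^3 * ln 2)"
    by (simp add: power3_eq_cube algebra_simps)
  have nz: "\<xi> * ln 2 \<noteq> 0" using xi by simp
  have "- ((\<xi> * \<xi> * ln 2 / (\<xi> - 1) - ln (\<xi> - 1) * (2 * \<xi> * ln 2)) / (\<xi> * \<xi> * ln 2 * (\<xi> * \<xi> * ln 2)))
        = - (((\<xi> * ln 2) * (a - 2 * L)) / ((\<xi> * ln 2) * (\<xi>^3 * ln 2)))" unfolding e1 e2 ..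
  also have "\<dots> = - ((a - 2 * L) / (\<xi>^3 * ln 2))" using nonzero_mult_divide_mult_cancel_left[OF nz] by simp
  also have "\<dots> = tf'' \<xi>" unfolding tf''_def a_def L_def by (simp add: minus_divide_left)
  finally show ?thesis using D by simp
qed

lemma strict_convex_core:
  fixes f f' :: "real \<Rightarrow> real"
  assumes der: "\<And>x. x \<in> {a..b} \<Longrightarrow> (f has_real_derivative f' x) (at x)"
    and mono: "\<And>x y. x \<in> {a..b} \<Longrightarrow> y \<in> {a..b} \<Longrightarrow> x < y \<Longrightarrow> f' x < f' y"
    and xy: "a \<le> x" "x < y" "y \<le> b" and u: "0 < u" "u < 1"
  shows "f ((1 - u) * x + u * y) < (1 - u) * f x + u * f y"
proof -
  define z where "z = (1 - u) * x + u * y"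
  have zx: "z - x = u * (y - x)" and yz: "y - z = (1 - u) * (y - x)"
    unfolding z_def by (simp_all add: algebra_simps)
  have yx: "0 < y - x" using xy by simp
  have "0 < u * (y - x)" using u yx by (intro mult_pos_pos) auto
  hence xz: "x < z" using zx by linarith
  have "0 < (1 - u) * (y - x)" using u yx by (intro mult_pos_pos) auto
  hence zy: "z < y" using yz by linarith
  have dd: "\<And>t. x \<le> t \<Longrightarrow> t \<le> y \<Longrightarrow> (f has_real_derivative f' t) (at t)"
    using der xy by auto
  have cont1: "continuous_on {x..z} f"
  proof (rule DERIV_atLeastAtMost_imp_continuous_on)
    fix t assume "x \<le> t" "t \<le> z"
    hence "x \<le> t" "t \<le> y" using zy by linarith+
    thus "\<exists>D. DERIV f t :> D" using dd by blast
  qed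
  have cont2: "continuous_on {z..y} f"
  proof (rule DERIV_atLeastAtMost_imp_continuous_on)
    fix t assume "z \<le> t" "t \<le> y"
    hence "x \<le> t" "t \<le> y" using xz by linarith+
    thus "\<exists>D. DERIV f t :> D" using dd by blast
  qed
  have dif: "\<And>t. x \<le> t \<Longrightarrow> t \<le> y \<Longrightarrow> f differentiable (at t)"
    unfolding real_differentiable_def using dd by blast
  obtain l1 al where al: "x < al" "al < z" "DERIV f al :> l1" "f z - f x = (z - x) * l1"
    using MVT[OF xz cont1] dif zy by force
  obtain l2 be where be: "z < be" "be < y" "DERIV f be :> l2" "f y - f z = (y - z) * l2"
    using MVT[OF zy cont2] dif xz by force
  have l1: "l1 = f' al" using DERIV_unique[OF al(3) dd[of al]] al xz zy by simp
  have l2: "l2 = f' be" using DERIV_unique[OF be(3) dd[of be]] be xz zy by simp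
  have lt: "l1 < l2" unfolding l1 l2 by (rule mono) (use al be xy in auto)
  have E1: "f x = f z - u * (y - x) * l1"
  proof -
    have "f x = f z - (z - x) * l1" using al(4) by simp
    thus ?thesis by (simp only: zx)
  qed
  have E2: "f y = f z + (1 - u) * (y - x) * l2"
  proof -
    have "f y = f z + (y - z) * l2" using be(4) by simp
    thus ?thesis by (simp only: yz)
  qed
  have "(1 - u) * f x + u * f y - f z = u * (1 - u) * (y - x) * (l2 - l1)"
    unfolding E1 E2 by (simp add: algebra_simps)
  moreover have "0 < u * (1 - u) * (y - x) * (l2 - l1)" using u yx lt by simp
  ultimately show ?thesis unfolding z_def by linarith
qed

lemma strict_convex_from_deriv:
  fixes f f' :: "real \<Rightarrow> real"
  assumes der: "\<And>x. x \<in> {a..b} \<Longrightarrow> (f has_real_derivative f' x) (at x)"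
    and mono: "\<And>x y. x \<in> {a..b} \<Longrightarrow> y \<in> {a..b} \<Longrightarrow> x < y \<Longrightarrow> f' x < f' y"
  shows "strict_convex_on_real {a..b} f"
  unfolding strict_convex_on_real_def
proof (intro ballI allI impI)
  fix x y u :: real assume x: "x \<in> {a..b}" and y: "y \<in> {a..b}" and h: "x \<noteq> y \<and> 0 < u \<and> u < 1"
  show "f ((1 - u) * x + u * y) < (1 - u) * f x + u * f y"
  proof (cases "x < y")
    case True
    show ?thesis by (rule strict_convex_core[OF der mono]) (use x y h True in auto)
  next
    case False
    hence yx: "y < x" using h by simp
    have "f ((1 - (1 - u)) * y + (1 - u) * x) < (1 - (1 - u)) * f y + (1 - u) * f x"
      by (rule strict_convex_core[OF der mono]) (use x y h yx in auto)
    thus ?thesis by (simp add: algebra_simps)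
  qed
qed

lemma strict_concave_from_deriv:
  fixes f f' :: "real \<Rightarrow> real"
  assumes der: "\<And>x. x \<in> {a..b} \<Longrightarrow> (f has_real_derivative f' x) (at x)"
    and mono: "\<And>x y. x \<in> {a..b} \<Longrightarrow> y \<in> {a..b} \<Longrightarrow> x < y \<Longrightarrow> f' y < f' x"
  shows "strict_concave_on_real {a..b} f"
  unfolding strict_concave_on_real_def
proof (rule strict_convex_from_deriv[of a b _ "\<lambda>x. - f' x"])
  fix x assume "x \<in> {a..b}"
  thus "((\<lambda>x. - f x) has_real_derivative - f' x) (at x)" by (intro DERIV_minus der)
next
  fix x y assume "x \<in> {a..b}" "y \<in> {a..b}" "x < y"
  thus "- f' x < - f' y" using mono by simp
qed

lemma convex_comb_in: "x \<in> {a..b} \<Longrightarrow> y \<in> {a..b} \<Longrightarrow> 0 < u \<Longrightarrow> u < 1 \<Longrightarrow> (1 - u) * x + u * y \<in> {a..(b::real)}"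
proof -
  assume x: "x \<in> {a..b}" and y: "y \<in> {a..b}" and u: "0 < u" "u < 1"
  have "(1 - u) * a \<le> (1 - u) * x" "u * a \<le> u * y" using x y u by (simp_all add: mult_left_mono)
  moreover have "(1 - u) * x \<le> (1 - u) * b" "u * y \<le> u * b" using x y u by (simp_all add: mult_left_mono)
  ultimately show ?thesis by (simp add: algebra_simps)
qed

lemma convex_congr:
  assumes eq: "\<And>x. x \<in> {a..b} \<Longrightarrow> f x = g x" and c: "strict_convex_on_real {a..b} f"
  shows "strict_convex_on_real {a..b} g"
  unfolding strict_convex_on_real_def
proof (intro ballI allI impI)
  fix x y u :: real assume x: "x \<in> {a..b}" and y: "y \<in> {a..b}" and h: "x \<noteq> y \<and> 0 < u \<and> u < 1"
  have "f ((1 - u) * x + u * y) < (1 - u) * f x + u * f y"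
    using c x y h unfolding strict_convex_on_real_def by blast
  moreover have "(1 - u) * x + u * y \<in> {a..b}" by (rule convex_comb_in) (use x y h in auto)
  ultimately show "g ((1 - u) * x + u * y) < (1 - u) * g x + u * g y" using eq x y by simp
qed

lemma concave_congr:
  assumes eq: "\<And>x. x \<in> {a..b} \<Longrightarrow> f x = g x" and c: "strict_concave_on_real {a..b} f"
  shows "strict_concave_on_real {a..b} g"
  using c unfolding strict_concave_on_real_def by (rule convex_congr[rotated]) (simp add: eq)

lemma convex_sub: "strict_convex_on_real X1 f \<Longrightarrow> X2 \<subseteq> X1 \<Longrightarrow> strict_convex_on_real X2 f"
  unfolding strict_convex_on_real_def by blast

lemma concave_sub: "strict_concave_on_real X1 f \<Longrightarrow> X2 \<subseteq> X1 \<Longrightarrow> strict_concave_on_real X2 f"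
  unfolding strict_concave_on_real_def by (rule convex_sub)

lemma not_both:
  assumes ab: "a < b" and c1: "strict_convex_on_real {a..b} f" and c2: "strict_concave_on_real {a..b} f"
  shows False
proof -
  have ia: "a \<in> {a..b}" and ib: "b \<in> {a..b}" and ne: "a \<noteq> b \<and> 0 < (1/2::real) \<and> (1/2::real) < 1"
    using ab by auto
  have "f ((1 - 1/2) * a + 1/2 * b) < (1 - 1/2) * f a + 1/2 * f b"
    using c1[unfolded strict_convex_on_real_def, rule_format, OF ia ib ne] .
  moreover have "- f ((1 - 1/2) * a + 1/2 * b) < (1 - 1/2) * (- f a) + 1/2 * (- f b)"
    using c2[unfolded strict_concave_on_real_def strict_convex_on_real_def, rule_format, OF ia ib ne] .
  ultimately show False by linarith
qed

definition hf :: "real \<Rightarrow> real" where "hf \<xi> = 2 * ln (\<xi> - 1) - \<xi> / (\<xi> - 1)"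

lemma hf_mono: "1 < x \<Longrightarrow> x < y \<Longrightarrow> hf x < hf y"
proof -
  assume x: "1 < x" and xy: "x < y"
  have "ln (x - 1) < ln (y - 1)" using x xy by simp
  moreover have "y / (y - 1) < x / (x - 1)" using x xy by (simp add: field_simps)
  ultimately show ?thesis unfolding hf_def by simp
qed

lemma hf_root: "\<exists>c. 1 < c \<and> hf c = 0"
proof -
  have e1: "1 \<le> exp (2::real)" by simp
  have ab: "2 \<le> 1 + exp (2::real)" using e1 by simp
  have c: "continuous_on {2..1 + exp 2} hf" unfolding hf_def
    by (intro continuous_intros) auto
  have h1: "hf 2 \<le> 0" unfolding hf_def by simp
  have e3: "1 \<le> 3 * exp (2::real)" using e1 by linarith
  have "(1 + exp 2) / exp 2 \<le> (4::real)" using e3 by (simp add: divide_le_eq)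
  hence h2: "0 \<le> hf (1 + exp 2)" unfolding hf_def by simp
  obtain c where "2 \<le> c" "c \<le> 1 + exp 2" "hf c = 0" using IVT'[of hf 2 0 "1 + exp 2", OF h1 h2 ab c] by blast
  thus ?thesis by (intro exI[of _ c]) simp
qed

lemma tf''_eq: "tf'' \<xi> = hf \<xi> / (\<xi>^3 * ln 2)" unfolding tf''_def hf_def by simp

context
  fixes c0 :: real
  assumes c0: "1 < c0" "hf c0 = 0"
begin

lemma tf''_neg: "1 < x \<Longrightarrow> x < c0 \<Longrightarrow> tf'' x < 0"
proof -
  assume x: "1 < x" "x < c0"
  have "hf x < 0" using hf_mono[OF x] c0 by simp
  moreover have "0 < x^3 * ln 2" using x by simp
  ultimately show ?thesis unfolding tf''_eq by (simp add: divide_neg_pos)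
qed

lemma tf''_pos: "c0 < x \<Longrightarrow> 0 < tf'' x"
proof -
  assume x: "c0 < x"
  have "0 < hf x" using hf_mono[OF c0(1) x] c0 by simp
  moreover have "0 < x^3 * ln 2" using x c0 by simp
  ultimately show ?thesis unfolding tf''_eq by simp
qed

lemma tf'_cont: "1 < x \<Longrightarrow> continuous_on {x..y} tf'"
proof (rule DERIV_atLeastAtMost_imp_continuous_on)
  fix t assume "1 < x" "x \<le> t" "t \<le> y"
  hence "1 < t" by simp
  thus "\<exists>D. DERIV tf' t :> D" using tf'_deriv by blast
qed

lemma tf'_dec: "1 < x \<Longrightarrow> x < y \<Longrightarrow> y \<le> c0 \<Longrightarrow> tf' y < tf' x"
proof -
  assume x: "1 < x" and xy: "x < y" and y: "y \<le> c0"
  show ?thesis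
  proof (rule DERIV_neg_imp_decreasing_open[OF xy _ tf'_cont[OF x]])
    fix t assume "x < t" "t < y"
    hence t: "1 < t" "t < c0" using x y by auto
    show "\<exists>D. DERIV tf' t :> D \<and> D < 0" using tf'_deriv[OF t(1)] tf''_neg[OF t] by blast
  qed
qed

lemma tf'_inc: "c0 \<le> x \<Longrightarrow> x < y \<Longrightarrow> tf' x < tf' y"
proof -
  assume x: "c0 \<le> x" and xy: "x < y"
  have x1: "1 < x" using x c0 by simp
  show ?thesis
  proof (rule DERIV_pos_imp_increasing_open[OF xy _ tf'_cont[OF x1]])
    fix t assume "x < t" "t < y"
    hence t: "c0 < t" "1 < t" using x c0 by auto
    show "\<exists>D. DERIV tf' t :> D \<and> D > 0" using tf'_deriv[OF t(2)] tf''_pos[OF t(1)] by blast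
  qed
qed

lemma tdim_tf: "1 < x \<Longrightarrow> tf x = tdim x" using dim_formula by simp

lemma concave_tdim: "1 < a \<Longrightarrow> b \<le> c0 \<Longrightarrow> strict_concave_on_real {a..b} tdim"
proof -
  assume a: "1 < a" and b: "b \<le> c0"
  have "strict_concave_on_real {a..b} tf"
  proof (rule strict_concave_from_deriv[of a b tf tf'])
    fix x assume "x \<in> {a..b}" thus "(tf has_real_derivative tf' x) (at x)" using a by (intro tf_deriv) simp
  next
    fix x y assume "x \<in> {a..b}" "y \<in> {a..b}" "x < y"
    thus "tf' y < tf' x" using a b by (intro tf'_dec) auto
  qed
  thus ?thesis by (rule concave_congr[rotated]) (use a tdim_tf in simp)
qed

lemma convex_tdim: "c0 \<le> a \<Longrightarrow> strict_convex_on_real {a..b} tdim"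
proof -
  assume a: "c0 \<le> a"
  have a1: "1 < a" using a c0 by simp
  have "strict_convex_on_real {a..b} tf"
  proof (rule strict_convex_from_deriv[of a b tf tf'])
    fix x assume "x \<in> {a..b}" thus "(tf has_real_derivative tf' x) (at x)" using a1 by (intro tf_deriv) simp
  next
    fix x y assume "x \<in> {a..b}" "y \<in> {a..b}" "x < y"
    thus "tf' x < tf' y" using a by (intro tf'_inc) auto
  qed
  thus ?thesis by (rule convex_congr[rotated]) (use a1 tdim_tf in simp)
qed

lemma infl_c0: "inflection_point tdim c0"
  unfolding inflection_point_def
proof (intro exI[of _ "(c0 - 1) / 2"] conjI disjI2)
  show "(c0 - 1) / 2 > 0" using c0 by simp
  have "1 < c0 - (c0 - 1) / 2" using c0 by (simp add: field_simps)
  thus "strict_concave_on_real {c0 - (c0 - 1) / 2..c0} tdim"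
    by (intro concave_tdim) auto
  show "strict_convex_on_real {c0..c0 + (c0 - 1) / 2} tdim"
    by (rule convex_tdim) simp
qed

lemma infl_unique: assumes c: "1 < c" and inf: "inflection_point tdim c" shows "c = c0"
proof (rule ccontr)
  assume ne: "c \<noteq> c0"
  obtain e where e: "e > 0" and D: "(strict_convex_on_real {c-e..c} tdim \<and> strict_concave_on_real {c..c+e} tdim) \<or>
     (strict_concave_on_real {c-e..c} tdim \<and> strict_convex_on_real {c..c+e} tdim)"
    using inf unfolding inflection_point_def by blast
  show False
  proof (cases "c < c0")
    case True
    define a' where "a' = max (c - e) ((1 + c) / 2)"
    have m1: "1 < (1 + c) / 2" "(1 + c) / 2 < c" using c by (simp_all add: field_simps)
    have ce: "c - e < c" using e by simp
    have a'1: "c - e \<le> a'" unfolding a'_def by (rule max.cobounded1)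
    have a'2: "1 < a'" unfolding a'_def using m1(1) less_max_iff_disj by blast
    have a'3: "a' < c" unfolding a'_def using m1(2) ce max_less_iff_conj by blast
    note a' = a'1 a'2 a'3
    define b' where "b' = min (c + e) c0"
    have b': "b' \<le> c + e" "b' \<le> c0" "c < b'" unfolding b'_def using e True by auto
    from D show False
    proof
      assume h: "strict_convex_on_real {c-e..c} tdim \<and> strict_concave_on_real {c..c+e} tdim"
      have "strict_convex_on_real {a'..c} tdim" by (rule convex_sub[OF h[THEN conjunct1]]) (use a' in auto)
      moreover have "strict_concave_on_real {a'..c} tdim" by (rule concave_tdim) (use a' True in auto)
      ultimately show False by (intro not_both[of a' c tdim]) (use a' in auto)
    next
      assume h: "strict_concave_on_real {c-e..c} tdim \<and> strict_convex_on_real {c..c+e} tdim"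
      have "strict_convex_on_real {c..b'} tdim" by (rule convex_sub[OF h[THEN conjunct2]]) (use b' in auto)
      moreover have "strict_concave_on_real {c..b'} tdim" by (rule concave_tdim) (use c b' in auto)
      ultimately show False by (intro not_both[of c b' tdim]) (use b' in auto)
    qed
  next
    case False
    hence gt: "c0 < c" using ne by simp
    define a' where "a' = max (c - e) c0"
    have a': "c - e \<le> a'" "c0 \<le> a'" "a' < c" unfolding a'_def using gt e by auto
    from D show False
    proof
      assume h: "strict_convex_on_real {c-e..c} tdim \<and> strict_concave_on_real {c..c+e} tdim"
      have "strict_concave_on_real {c..c+e} tdim" using h by blast
      moreover have "strict_convex_on_real {c..c+e} tdim" by (rule convex_tdim) (use gt in simp)
      ultimately show False by (intro not_both[of c "c+e" tdim]) (use e in auto)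
    next
      assume h: "strict_concave_on_real {c-e..c} tdim \<and> strict_convex_on_real {c..c+e} tdim"
      have "strict_concave_on_real {a'..c} tdim" by (rule concave_sub[OF h[THEN conjunct1]]) (use a' in auto)
      moreover have "strict_convex_on_real {a'..c} tdim" by (rule convex_tdim) (use a' in simp)
      ultimately show False by (intro not_both[of a' c tdim]) (use a' in auto)
    qed
  qed
qed

end

lemma infl_ex1: "\<exists>!c. c \<in> {1<..} \<and> inflection_point tdim c"
proof -
  obtain c0 where c0: "1 < c0" "hf c0 = 0" using hf_root by blast
  show ?thesis
  proof (rule ex1I[of _ c0])
    show "c0 \<in> {1<..} \<and> inflection_point tdim c0" using infl_c0[OF c0] c0 by simp
    fix c assume "c \<in> {1<..} \<and> inflection_point tdim c"
    thus "c = c0" using infl_unique[OF c0] by simp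
  qed
qed

lemma tdim_deriv: "1 < \<xi> \<Longrightarrow> (tdim has_real_derivative tf' \<xi>) (at \<xi>)"
proof -
  assume xi: "1 < \<xi>"
  show ?thesis
  proof (rule has_field_derivative_transform_within_open[OF tf_deriv[OF xi], of "{1<..}"])
    show "open {1::real<..}" by simp
    show "\<xi> \<in> {1<..}" using xi by simp
    fix x :: real assume "x \<in> {1<..}" thus "tf x = tdim x" using dim_formula by simp
  qed
qed

lemma deriv_tdim: "1 < \<xi> \<Longrightarrow> deriv tdim \<xi> = tf' \<xi>"
  by (rule DERIV_imp_deriv[OF tdim_deriv])

theorem theorem1p1:
  shows "hausdorff_dim (Elevel 1) = 0
    \<and> (\<forall>\<xi>>1. tdim \<xi> = (ln (\<xi> - 1) / \<xi> + ln \<xi> - ln (\<xi> - 1)) / ln 2)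
    \<and> tdim 2 = 1
    \<and> (tdim \<longlongrightarrow> 0) (at_right 1) \<and> (tdim \<longlongrightarrow> 0) at_top
    \<and> (\<forall>\<xi>\<in>{1<..<2}. \<exists>D. (tdim has_real_derivative D) (at \<xi>) \<and> D > 0)
    \<and> (tdim has_real_derivative 0) (at 2)
    \<and> (\<forall>\<xi>>2. \<exists>D. (tdim has_real_derivative D) (at \<xi>) \<and> D < 0)
    \<and> filterlim (deriv tdim) at_top (at_right 1)
    \<and> (deriv tdim \<longlongrightarrow> 0) at_top
    \<and> (\<exists>!c. c \<in> {1<..} \<and> inflection_point tdim c)"
proof (intro conjI)
  show "hausdorff_dim (Elevel 1) = 0" by (rule dim_one)
  show "\<forall>\<xi>>1. tdim \<xi> = (ln (\<xi> - 1) / \<xi> + ln \<xi> - ln (\<xi> - 1)) / ln 2"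
    using dim_formula unfolding tf_def by simp
  show "tdim 2 = 1" using dim_formula[of 2] unfolding tf_def by simp
  have ev1: "eventually (\<lambda>x. tf x = tdim x) (at_right (1::real))"
    using eventually_at_right_less[of "1::real"] by eventually_elim (simp add: dim_formula)
  have evt: "eventually (\<lambda>x. tf x = tdim x) (at_top :: real filter)"
    using eventually_gt_at_top[of "1::real"] by eventually_elim (simp add: dim_formula)
  show "(tdim \<longlongrightarrow> 0) (at_right 1)" using tf_lim1 tendsto_cong[OF ev1] by simp
  show "(tdim \<longlongrightarrow> 0) at_top" using tf_lim_top tendsto_cong[OF evt] by simp
  show "\<forall>\<xi>\<in>{1<..<2}. \<exists>D. (tdim has_real_derivative D) (at \<xi>) \<and> D > 0"
  proof
    fix \<xi> :: real assume "\<xi> \<in> {1<..<2}"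
    hence xi: "1 < \<xi>" "\<xi> < 2" by auto
    have l: "ln (\<xi> - 1) < 0" using xi by simp
    have dpos: "0 < \<xi>^2 * ln 2" using xi by simp
    have "ln (\<xi> - 1) / (\<xi>^2 * ln 2) < 0" by (rule divide_neg_pos[OF l dpos])
    hence "tf' \<xi> > 0" unfolding tf'_def by simp
    thus "\<exists>D. (tdim has_real_derivative D) (at \<xi>) \<and> D > 0" using tdim_deriv[OF xi(1)] by blast
  qed
  show "(tdim has_real_derivative 0) (at 2)"
    using tdim_deriv[of 2] unfolding tf'_def by simp
  show "\<forall>\<xi>>2. \<exists>D. (tdim has_real_derivative D) (at \<xi>) \<and> D < 0"
  proof (intro allI impI)
    fix \<xi> :: real assume xi: "\<xi> > 2"
    have "ln (\<xi> - 1) > 0" using xi by simp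
    hence "tf' \<xi> < 0" unfolding tf'_def using xi by (simp add: divide_neg_pos)
    thus "\<exists>D. (tdim has_real_derivative D) (at \<xi>) \<and> D < 0" using tdim_deriv[of \<xi>] xi by auto
  qed
  have dv1: "eventually (\<lambda>x. tf' x = deriv tdim x) (at_right (1::real))"
    using eventually_at_right_less[of "1::real"] by eventually_elim (simp add: deriv_tdim)
  have dvt: "eventually (\<lambda>x. tf' x = deriv tdim x) (at_top :: real filter)"
    using eventually_gt_at_top[of "1::real"] by eventually_elim (simp add: deriv_tdim)
  show "filterlim (deriv tdim) at_top (at_right 1)"
    using tf'_lim1 filterlim_cong[OF refl refl dv1] by simp
  show "(deriv tdim \<longlongrightarrow> 0) at_top" using tf'_lim_top tendsto_cong[OF dvt] by simp
  show "\<exists>!c. c \<in> {1<..} \<and> inflection_point tdim c" by (rule infl_ex1)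
qed

end
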